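(* Let $d\geq 2$ and let $\varGamma$ be a lattice in $\mathbb{R}^d$. Then $\operatorname{SOC}(\varGamma)$ is a normal subgroup of $\operatorname{SOS}(\varGamma)$, the factor group $\operatorname{SOS}(\varGamma)/\operatorname{SOC}(\varGamma)$ is countable, and it is the direct sum of cyclic groups of prime power orders that divide $d$.
   Context: A lattice in $\mathbb{R}^d$ is a subgroup of the form $\mathbb{Z}b_1\oplus\cdots\oplus\mathbb{Z}b_d$ where $\{b_1,\dots,b_d\}$ is a basis of $\mathbb{R}^d$. Two lattices $\varGamma,\varGamma'$ are commensurate, written $\varGamma\sim\varGamma'$, if $\varGamma\cap\varGamma'$ has finite index both in $\varGamma$ and in $\varGamma'$. $\operatorname{SOC}(\varGamma)=\{R\in\operatorname{SO}(d):\varGamma\sim R\varGamma\}$ is the group of coincidence rotations and $\operatorname{SOS}(\varGamma)=\{R\in\operatorname{SO}(d):\varGamma\sim\alpha R\varGamma\text{ for some }\alpha>0\}$ is the group of similarity rotations; both are subgroups of $\operatorname{SO}(d)$ and $\operatorname{SOC}(\varGamma)\subset\operatorname{SOS}(\varGamma)$. *)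

theory Defs
  imports "HOL-Analysis.Analysis" "HOL-Algebra.Product_Groups" "HOL-Algebra.Elementary_Groups"
    "HOL-Computational_Algebra.Primes"
begin

definition is_lattice :: "(real^'n) set \<Rightarrow> bool" where
  "is_lattice L \<longleftrightarrow> (\<exists>b :: 'n \<Rightarrow> real^'n. inj b \<and> independent (range b) \<and>
       L = range (\<lambda>k :: 'n \<Rightarrow> int. \<Sum>i\<in>UNIV. of_int (k i) *\<^sub>R b i))"

definition finite_index :: "(real^'n) set \<Rightarrow> (real^'n) set \<Rightarrow> bool" where
  "finite_index H G \<longleftrightarrow> finite ((\<lambda>x. (\<lambda>h. x + h) ` H) ` G)"

definition commensurate :: "(real^'n) set \<Rightarrow> (real^'n) set \<Rightarrow> bool" where
  "commensurate L L' \<longleftrightarrow> finite_index (L \<inter> L') L \<and> finite_index (L \<inter> L') L'"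

definition SO_set :: "(real^'n^'n) set" where
  "SO_set = {R. orthogonal_matrix R \<and> det R = 1}"

definition SOC :: "(real^'n) set \<Rightarrow> (real^'n^'n) set" where
  "SOC L = {R \<in> SO_set. commensurate L ((\<lambda>x. R *v x) ` L)}"

definition SOS :: "(real^'n) set \<Rightarrow> (real^'n^'n) set" where
  "SOS L = {R \<in> SO_set. \<exists>\<alpha>::real. \<alpha> > 0 \<and> commensurate L ((\<lambda>x. \<alpha> *\<^sub>R (R *v x)) ` L)}"

definition SO_group :: "(real^'n^'n) monoid" where
  "SO_group = \<lparr>carrier = SO_set, monoid.mult = (**), one = mat 1\<rparr>"

definition SO_subgroup :: "(real^'n^'n) set \<Rightarrow> (real^'n^'n) monoid" where
  "SO_subgroup S = \<lparr>carrier = S, monoid.mult = (**), one = mat 1\<rparr>"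

end

theory Submission
  imports Defs "HOL-Algebra.Multiplicative_Group" "HOL-Number_Theory.Cong" "HOL-Algebra.Free_Abelian_Groups"
begin


context comm_group begin

lemma sub_pow_closed: "subgroup H G \<Longrightarrow> x \<in> H \<Longrightarrow> x [^] (n::nat) \<in> H"
  by (induction n) (auto simp: subgroup.one_closed subgroup.m_closed)

definition spn :: "'a set \<Rightarrow> 'a set" where
  "spn S = {finprod G (\<lambda>s. s [^] (c s :: nat)) F | F c. finite F \<and> F \<subseteq> S}"

definition indep :: "'a set \<Rightarrow> bool" where
  "indep S \<longleftrightarrow> (\<forall>F c. finite F \<longrightarrow> F \<subseteq> S \<longrightarrow> finprod G (\<lambda>s. s [^] (c s :: nat)) F = \<one>
      \<longrightarrow> (\<forall>s\<in>F. s [^] c s = \<one>))"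

lemma finprod_pow_nat:
  assumes "finite F" "f \<in> F \<rightarrow> carrier G"
  shows "(finprod G f F) [^] (n::nat) = finprod G (\<lambda>s. f s [^] n) F"
  using assms
proof (induction F rule: finite_induct)
  case empty thus ?case by simp
next
  case (insert x F)
  then show ?case by (simp add: nat_pow_distrib Pi_def)
qed

lemma spnI: "finite F \<Longrightarrow> F \<subseteq> S \<Longrightarrow> finprod G (\<lambda>s. s [^] (c s :: nat)) F \<in> spn S"
  unfolding spn_def by blast

lemma spn_carrier: "S \<subseteq> carrier G \<Longrightarrow> spn S \<subseteq> carrier G"
  unfolding spn_def by (auto intro!: finprod_closed)

lemma spn_one: "\<one> \<in> spn S"
  using spnI[of "{}" S] by simp

lemma spn_base: "S \<subseteq> carrier G \<Longrightarrow> s \<in> S \<Longrightarrow> s \<in> spn S"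
  using spnI[of "{s}" S "\<lambda>_. 1"] by auto

lemma spn_mult:
  assumes S: "S \<subseteq> carrier G" and x: "x \<in> spn S" and y: "y \<in> spn S"
  shows "x \<otimes> y \<in> spn S"
proof -
  obtain F1 c1 where F1: "finite F1" "F1 \<subseteq> S" "x = finprod G (\<lambda>s. s [^] (c1 s :: nat)) F1"
    using x unfolding spn_def by blast
  obtain F2 c2 where F2: "finite F2" "F2 \<subseteq> S" "y = finprod G (\<lambda>s. s [^] (c2 s :: nat)) F2"
    using y unfolding spn_def by blast
  define F where "F = F1 \<union> F2"
  define d1 where "d1 s = (if s \<in> F1 then c1 s else 0)" for s
  define d2 where "d2 s = (if s \<in> F2 then c2 s else 0)" for s
  have FS: "F \<subseteq> carrier G" "finite F" using F1 F2 S by (auto simp: F_def)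
  have "x = finprod G (\<lambda>s. s [^] d1 s) F"
    unfolding F1(3) using FS by (intro finprod_mono_neutral_cong_left) (auto simp: F_def d1_def)
  moreover have "y = finprod G (\<lambda>s. s [^] d2 s) F"
    unfolding F2(3) using FS by (intro finprod_mono_neutral_cong_left) (auto simp: F_def d2_def)
  ultimately have "x \<otimes> y = finprod G (\<lambda>s. s [^] d1 s \<otimes> s [^] d2 s) F"
    using FS by (simp add: finprod_multf Pi_def subset_eq)
  also have "\<dots> = finprod G (\<lambda>s. s [^] (d1 s + d2 s)) F"
    using FS by (intro finprod_cong) (auto simp: nat_pow_mult subset_eq)
  finally show ?thesis using FS F1 F2 spnI[of F S "\<lambda>s. d1 s + d2 s"] by (auto simp: F_def)
qed

lemma spn_pow:
  assumes S: "S \<subseteq> carrier G" and x: "x \<in> spn S"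
  shows "x [^] (n::nat) \<in> spn S"
proof -
  obtain F c where F: "finite F" "F \<subseteq> S" "x = finprod G (\<lambda>s. s [^] (c s :: nat)) F"
    using x unfolding spn_def by blast
  have "x [^] n = finprod G (\<lambda>s. (s [^] c s) [^] n) F"
    unfolding F(3) using F S by (intro finprod_pow_nat) auto
  also have "\<dots> = finprod G (\<lambda>s. s [^] (c s * n)) F"
    using F S by (intro finprod_cong) (auto simp: nat_pow_pow subset_eq)
  finally show ?thesis using spnI[OF F(1,2)] by simp
qed

lemma spn_finprod:
  assumes S: "S \<subseteq> carrier G" and "finite F" "\<And>s. s \<in> F \<Longrightarrow> f s \<in> spn S"
  shows "finprod G f F \<in> spn S"
  using assms(2,3)
proof (induction F rule: finite_induct)
  case empty then show ?case by (simp add: spn_one)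
next
  case (insert x F)
  have "f \<in> F \<rightarrow> carrier G" using insert spn_carrier[OF S] by auto
  moreover have "f x \<in> carrier G" using insert spn_carrier[OF S] by auto
  ultimately show ?case using insert spn_mult[OF S] by simp
qed

lemma spn_mono_sub:
  assumes B: "B \<subseteq> carrier G" and AB: "A \<subseteq> spn B"
  shows "spn A \<subseteq> spn B"
proof
  fix x assume "x \<in> spn A"
  then obtain F c where F: "finite F" "F \<subseteq> A" "x = finprod G (\<lambda>s. s [^] (c s :: nat)) F"
    unfolding spn_def by blast
  show "x \<in> spn B" unfolding F(3)
    using F AB by (intro spn_finprod[OF B]) (auto intro: spn_pow[OF B])
qed

lemma spn_mono: "A \<subseteq> B \<Longrightarrow> spn A \<subseteq> spn B"
  unfolding spn_def by blast

lemma spn_subgroup: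
  assumes "subgroup H G" "S \<subseteq> H" shows "spn S \<subseteq> H"
proof
  fix x assume "x \<in> spn S"
  then obtain F c where F: "finite F" "F \<subseteq> S" "x = finprod G (\<lambda>s. s [^] (c s :: nat)) F"
    unfolding spn_def by blast
  show "x \<in> H" unfolding F(3) using F(1,2) assms
  proof (induction F rule: finite_induct)
    case empty then show ?case by (simp add: subgroup.one_closed)
  next
    case (insert y F)
    have Hc: "H \<subseteq> carrier G" using insert subgroup.subset by blast
    have "y [^] c y \<in> H" using insert sub_pow_closed by blast
    then show ?case using insert Hc subgroup.m_closed[of H G]
      by (subst finprod_insert) (auto simp: Pi_def subset_eq)
  qed
qed

end


lemma finitary_maximal:
  assumes P: "\<And>Z. P Z \<longleftrightarrow> (Z \<subseteq> U \<and> (\<forall>F. finite F \<longrightarrow> F \<subseteq> Z \<longrightarrow> Q F))" and "P {}"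
  shows "\<exists>M. P M \<and> (\<forall>X. P X \<longrightarrow> M \<subseteq> X \<longrightarrow> X = M)"
proof -
  have "\<forall>C\<in>chains {Z. P Z}. \<Union>C \<in> {Z. P Z}"
  proof
    fix C assume C: "C \<in> chains {Z. P Z}"
    show "\<Union>C \<in> {Z. P Z}"
    proof (cases "C = {}")
      case True then show ?thesis using assms(2) by simp
    next
      case False
      have ch: "subset.chain {Z. P Z} C" using C by (simp add: chains_alt_def)
      have sub: "\<And>B. B \<in> C \<Longrightarrow> P B" using C by (auto simp: chains_def)
      have "\<Union>C \<subseteq> U"
      proof
        fix x assume "x \<in> \<Union>C" then obtain B where "B \<in> C" "x \<in> B" by blast
        then show "x \<in> U" using sub[of B] P[of B] by blast
      qed
      moreover have "Q F" if fF: "finite F" and sF: "F \<subseteq> \<Union>C" for F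
      proof -
        obtain B where B: "B \<in> C" "F \<subseteq> B"
          using finite_subset_Union_chain[OF fF sF False ch] by blast
        have "P B" using sub B by blast
        then show ?thesis using P[of B] fF B by blast
      qed
      ultimately have "\<Union>C \<subseteq> U \<and> (\<forall>F. finite F \<longrightarrow> F \<subseteq> \<Union>C \<longrightarrow> Q F)" by blast
      then show ?thesis using P[of "\<Union>C"] by simp
    qed
  qed
  from Zorn_Lemma[OF this] show ?thesis by blast
qed
context comm_group begin

lemma pow_mod_exp:
  assumes "x \<in> carrier G" "x [^] (k::nat) = \<one>"
  shows "x [^] (n::nat) = x [^] (n mod k)"
proof -
  have "x [^] n = x [^] (k * (n div k)) \<otimes> x [^] (n mod k)"
    using assms(1) by (simp add: nat_pow_mult)
  moreover have "x [^] (k * (n div k)) = \<one>"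
    using assms by (simp add: nat_pow_pow[symmetric])
  ultimately show ?thesis using assms by simp
qed

lemma inv_pow_exp:
  assumes "x \<in> carrier G" "x [^] (d::nat) = \<one>" "0 < d"
  shows "inv x = x [^] (d - 1)"
proof -
  have "x [^] (d - 1) \<otimes> x = \<one>" using assms
    by (metis Suc_diff_1 nat_pow_Suc)
  then show ?thesis using assms by (simp add: inv_char m_comm)
qed

lemma sub_finprod:
  assumes "subgroup H G" "finite F" "\<And>s. s \<in> F \<Longrightarrow> f s \<in> H"
  shows "finprod G f F \<in> H"
  using assms(2,3)
proof (induction F rule: finite_induct)
  case empty then show ?case by (simp add: subgroup.one_closed[OF assms(1)])
next
  case (insert y F)
  have Hc: "H \<subseteq> carrier G" using assms subgroup.subset by blast
  then show ?case using insert subgroup.m_closed[OF assms(1)]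
    by (subst finprod_insert) (auto simp: Pi_def subset_eq)
qed

lemma sub_torsion:
  assumes "subgroup H G" shows "subgroup {x\<in>H. x [^] (p::nat) = \<one>} G"
proof (rule subgroupI)
  have Hc: "H \<subseteq> carrier G" using assms subgroup.subset by blast
  show "{x \<in> H. x [^] p = \<one>} \<subseteq> carrier G" using Hc by auto
  show "{x \<in> H. x [^] p = \<one>} \<noteq> {}" using subgroup.one_closed[OF assms] by auto
  show "inv a \<in> {x \<in> H. x [^] p = \<one>}" if "a \<in> {x \<in> H. x [^] p = \<one>}" for a
    using that Hc subgroup.m_inv_closed[OF assms] by (auto simp: nat_pow_inv)
  show "a \<otimes> b \<in> {x \<in> H. x [^] p = \<one>}" if "a \<in> {x \<in> H. x [^] p = \<one>}" "b \<in> {x \<in> H. x [^] p = \<one>}" for a b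
    using that Hc subgroup.m_closed[OF assms] by (auto simp: nat_pow_distrib subset_iff)
qed

lemma sub_pow_image:
  assumes "subgroup H G" shows "subgroup ((\<lambda>x. x [^] (p::nat)) ` H) G"
proof (rule subgroupI)
  have Hc: "H \<subseteq> carrier G" using assms subgroup.subset by blast
  show "(\<lambda>x. x [^] p) ` H \<subseteq> carrier G" using Hc by auto
  show "(\<lambda>x. x [^] p) ` H \<noteq> {}" using subgroup.one_closed[OF assms] by auto
  show "inv a \<in> (\<lambda>x. x [^] p) ` H" if aa: "a \<in> (\<lambda>x. x [^] p) ` H" for a
  proof -
    obtain x where "x \<in> H" "a = x [^] p" using aa by blast
    then show ?thesis using Hc subgroup.m_inv_closed[OF assms]
      by (intro image_eqI[of _ _ "inv x"]) (auto simp: nat_pow_inv)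
  qed
  show "a \<otimes> b \<in> (\<lambda>x. x [^] p) ` H" if aa: "a \<in> (\<lambda>x. x [^] p) ` H" and bb: "b \<in> (\<lambda>x. x [^] p) ` H" for a b
  proof -
    obtain x y where "x \<in> H" "a = x [^] p" "y \<in> H" "b = y [^] p" using aa bb by blast
    then show ?thesis using Hc subgroup.m_closed[OF assms]
      by (intro image_eqI[of _ _ "x \<otimes> y"]) (auto simp: nat_pow_distrib subset_iff)
  qed
qed

definition relind :: "'a set \<Rightarrow> 'a set \<Rightarrow> bool" where
  "relind K Z \<longleftrightarrow> (\<forall>F c. finite F \<longrightarrow> F \<subseteq> Z \<longrightarrow> finprod G (\<lambda>s. s [^] (c s :: nat)) F \<in> K
      \<longrightarrow> (\<forall>s\<in>F. s [^] c s = \<one>))"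

lemma complement:
  fixes p :: nat
  assumes H: "subgroup H G" and p: "prime p" and K: "K \<subseteq> {x\<in>H. x [^] p = \<one>}"
  shows "\<exists>Z. Z \<subseteq> {x\<in>H. x [^] p = \<one>} - {\<one>} \<and> relind K Z
            \<and> {x\<in>H. x [^] p = \<one>} \<subseteq> spn (K \<union> Z)"
proof -
  define Hp where "Hp = {x\<in>H. x [^] p = \<one>}"
  have Hc: "H \<subseteq> carrier G" using assms subgroup.subset by blast
  have Hpc: "Hp \<subseteq> carrier G" using Hc by (auto simp: Hp_def)
  have sHp: "subgroup Hp G" unfolding Hp_def by (rule sub_torsion[OF H])
  define P where "P Z \<longleftrightarrow> Z \<subseteq> Hp - {\<one>} \<and> relind K Z" for Z
  have "\<exists>M. P M \<and> (\<forall>X. P X \<longrightarrow> M \<subseteq> X \<longrightarrow> X = M)"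
  proof (rule finitary_maximal[where U = "Hp - {\<one>}" and Q = "\<lambda>F. relind K F"])
    show "P Z \<longleftrightarrow> (Z \<subseteq> Hp - {\<one>} \<and> (\<forall>F. finite F \<longrightarrow> F \<subseteq> Z \<longrightarrow> relind K F))" for Z
    proof
      assume "P Z" then show "Z \<subseteq> Hp - {\<one>} \<and> (\<forall>F. finite F \<longrightarrow> F \<subseteq> Z \<longrightarrow> relind K F)"
        unfolding P_def relind_def by (metis subset_trans)
    next
      assume a: "Z \<subseteq> Hp - {\<one>} \<and> (\<forall>F. finite F \<longrightarrow> F \<subseteq> Z \<longrightarrow> relind K F)"
      have "relind K Z" unfolding relind_def
      proof (intro allI impI)
        fix F c assume "finite F" "F \<subseteq> Z" "finprod G (\<lambda>s. s [^] (c s :: nat)) F \<in> K"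
        then show "\<forall>s\<in>F. s [^] c s = \<one>" using a unfolding relind_def by blast
      qed
      then show "P Z" using a by (simp add: P_def)
    qed
    show "P {}" unfolding P_def relind_def by auto
  qed
  then obtain Z where PZ: "P Z" and maxZ: "\<And>X. P X \<Longrightarrow> Z \<subseteq> X \<Longrightarrow> X = Z" by blast
  have Zs: "Z \<subseteq> Hp - {\<one>}" and rZ: "relind K Z" using PZ by (auto simp: P_def)
  have KZc: "K \<union> Z \<subseteq> carrier G" using K Zs Hpc by (auto simp: Hp_def)
  have "Hp \<subseteq> spn (K \<union> Z)"
  proof
    fix w assume w: "w \<in> Hp"
    show "w \<in> spn (K \<union> Z)"
    proof (rule ccontr)
      assume nw: "w \<notin> spn (K \<union> Z)"
      have wc: "w \<in> carrier G" using w Hpc by auto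
      have wp: "w [^] p = \<one>" using w by (auto simp: Hp_def)
      have w1: "w \<noteq> \<one>" using nw spn_one by auto
      have wZ: "w \<notin> Z" using nw spn_base[OF KZc] by auto
      have "relind K (insert w Z)"
        unfolding relind_def
      proof (intro allI impI)
        fix F c assume F: "finite F" "F \<subseteq> insert w Z" and prod: "finprod G (\<lambda>s. s [^] (c s :: nat)) F \<in> K"
        show "\<forall>s\<in>F. s [^] c s = \<one>"
        proof (cases "w \<in> F")
          case False
          then show ?thesis using rZ F prod unfolding relind_def by blast
        next
          case True
          define F' where "F' = F - {w}"
          have F': "finite F'" "F' \<subseteq> Z" "w \<notin> F'" using F by (auto simp: F'_def)
          have F'c: "F' \<subseteq> carrier G" using F'(2) Zs Hpc by auto
          have Feq: "F = insert w F'" using True by (auto simp: F'_def)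
          have pr: "finprod G (\<lambda>s. s [^] c s) F = w [^] c w \<otimes> finprod G (\<lambda>s. s [^] c s) F'"
            unfolding Feq using F' F'c wc by (subst finprod_insert) (auto simp: Pi_def subset_eq)
          have prc: "finprod G (\<lambda>s. s [^] c s) F' \<in> carrier G" using F'c by (auto intro: finprod_closed)
          show ?thesis
          proof (cases "w [^] c w = \<one>")
            case True
            then have "finprod G (\<lambda>s. s [^] c s) F' \<in> K" using pr prod prc by simp
            then have "\<forall>s\<in>F'. s [^] c s = \<one>" using rZ F' unfolding relind_def by blast
            then show ?thesis using True Feq by auto
          next
            case False
            have pnd: "\<not> p dvd c w"
            proof
              assume "p dvd c w"
              then obtain j where "c w = p * j" by blast
              then have "w [^] c w = (w [^] p) [^] j" using wc by (simp add: nat_pow_pow)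
              then have "w [^] c w = \<one>" using wp by simp
              then show False using False by simp
            qed
            have cop: "coprime (c w) p" using pnd p by (simp add: coprime_commute prime_imp_coprime)
            obtain v where v: "[c w * v = Suc 0] (mod p)" using cong_solve_coprime_nat[OF cop] by blast
            define y where "y = finprod G (\<lambda>s. s [^] c s) F'"
            have yS: "y \<in> spn (K \<union> Z)" unfolding y_def using F' by (intro spnI) auto
            have yH: "y \<in> Hp" unfolding y_def using F' Zs by (intro sub_finprod[OF sHp]) (auto intro: sub_pow_closed[OF sHp])
            have yc: "y \<in> carrier G" using yH Hpc by auto
            have "inv y = y [^] (p - 1)"
              using yH Hpc p by (intro inv_pow_exp) (auto simp: Hp_def prime_gt_0_nat)
            then have iyS: "inv y \<in> spn (K \<union> Z)" using spn_pow[OF KZc yS] by simp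
            have fK: "finprod G (\<lambda>s. s [^] c s) F \<in> spn (K \<union> Z)"
              using prod spn_base[OF KZc] by auto
            have "w [^] c w = finprod G (\<lambda>s. s [^] c s) F \<otimes> inv y"
              using pr wc yc by (simp add: y_def m_assoc)
            then have "w [^] c w \<in> spn (K \<union> Z)" using spn_mult[OF KZc fK iyS] by simp
            then have "(w [^] c w) [^] v \<in> spn (K \<union> Z)" using spn_pow[OF KZc] by blast
            moreover have "(w [^] c w) [^] v = w"
            proof -
              have "(w [^] c w) [^] v = w [^] (c w * v)" using wc by (simp add: nat_pow_pow)
              also have "\<dots> = w [^] ((c w * v) mod p)" by (rule pow_mod_exp[OF wc wp])
              also have "(c w * v) mod p = Suc 0 mod p" using v by (simp add: cong_def)
              also have "Suc 0 mod p = 1" using prime_gt_1_nat[OF p] by simp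
              finally show ?thesis using wc by simp
            qed
            ultimately show ?thesis using nw by simp
          qed
        qed
      qed
      then have "P (insert w Z)" using Zs w w1 by (auto simp: P_def)
      then have "insert w Z = Z" using maxZ by blast
      then show False using wZ by blast
    qed
  qed
  then show ?thesis using Zs rZ by (auto simp: Hp_def)
qed

end


context comm_group begin

lemma ord_lift:
  fixes p :: nat
  assumes p: "prime p" and tc: "t \<in> carrier G" and yc: "y \<in> carrier G" and yt: "y [^] p = t"
    and ot: "ord t = p ^ e" and e: "e \<ge> 1"
  shows "ord y = p ^ (e+1)"
proof -
  have "y [^] (p ^ (e+1)) = (y [^] p) [^] (p ^ e)" using yc by (simp add: nat_pow_pow)
  also have "\<dots> = \<one>" using yt ot pow_ord_eq_1[OF tc] by simp
  finally have "ord y dvd p ^ (e+1)" using pow_eq_id[OF yc] by simp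
  then obtain i where i: "i \<le> e+1" "ord y = p ^ i" using divides_primepow_nat[OF p] by blast
  have "i = e + 1"
  proof (rule ccontr)
    assume "i \<noteq> e + 1"
    then have "i \<le> e" using i by simp
    then have "ord y dvd p ^ e" using i by (simp add: le_imp_power_dvd)
    then have "y [^] (p ^ e) = \<one>" using pow_eq_id[OF yc] by simp
    moreover have "p ^ e = p * p ^ (e - 1)" using e by (cases e) auto
    ultimately have "(y [^] p) [^] (p ^ (e - 1)) = \<one>" using yc by (simp add: nat_pow_pow)
    then have "t [^] (p ^ (e - 1)) = \<one>" using yt by simp
    then have "p ^ e dvd p ^ (e - 1)" using pow_eq_id[OF tc] ot by simp
    moreover have "p ^ (e - 1) < p ^ e" using e prime_gt_1_nat[OF p] by (simp add: power_strict_increasing_iff)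
    moreover have "0 < p ^ (e - 1)" using prime_gt_0_nat[OF p] by simp
    ultimately show False by (simp add: nat_dvd_not_less)
  qed
  then show ?thesis using i by simp
qed

end


context comm_group begin

lemma indep_S1:
  fixes p :: nat and T Tp Tq :: "'a set" and g :: "'a \<Rightarrow> 'a"
  assumes p: "prime p" and Tc: "T \<subseteq> carrier G" and indT: "indep T"
    and Tp_def: "Tp = {t\<in>T. p dvd ord t}" and Tq_def: "Tq = {t\<in>T. \<not> p dvd ord t}"
    and g: "\<And>t. t \<in> Tp \<Longrightarrow> g t \<in> carrier G \<and> g t [^] p = t"
    and ordTp: "\<And>t. t \<in> Tp \<Longrightarrow> ord (g t) = p * ord t \<and> p dvd ord t \<and> 0 < ord t"
  shows "indep (Tq \<union> g ` Tp)"
  unfolding indep_def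
proof (intro allI impI)
  fix F c assume F: "finite F" "F \<subseteq> Tq \<union> g ` Tp"
    and pr: "finprod G (\<lambda>s. s [^] (c s :: nat)) F = \<one>"
  define A where "A = F \<inter> Tq"
  define B where "B = {t \<in> Tp. g t \<in> F}"
  have injg: "inj_on g Tp"
    by (rule inj_onI) (metis g)
  have FAB: "F = A \<union> g ` B" using F by (auto simp: A_def B_def)
  have copq: "coprime p (ord t)" if "t \<in> Tq" for t
    using that p by (auto simp: Tq_def intro: prime_imp_coprime)
  have disj: "A \<inter> g ` B = {}"
  proof -
    have "g t \<notin> Tq" if "t \<in> Tp" for t
      using ordTp[OF that] by (auto simp: Tq_def)
    then show ?thesis by (auto simp: A_def B_def)
  qed
  have finB: "finite B"
  proof -
    have "g ` B \<subseteq> F" by (auto simp: B_def)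
    then have "finite (g ` B)" using F(1) finite_subset by blast
    moreover have "inj_on g B" using injg by (rule inj_on_subset) (auto simp: B_def)
    ultimately show ?thesis using finite_imageD by blast
  qed
  have finA: "finite A" using F(1) by (simp add: A_def)
  have Ac: "A \<subseteq> carrier G" using Tc by (auto simp: A_def Tq_def)
  have Bc: "B \<subseteq> carrier G" using Tc by (auto simp: B_def Tp_def)
  have gBc: "g ` B \<subseteq> carrier G" using g by (auto simp: B_def)
  have AB: "A \<inter> B = {}" by (auto simp: A_def B_def Tp_def Tq_def)
  have prgB: "finprod G (\<lambda>s. s [^] c s) (g ` B) = finprod G (\<lambda>t. g t [^] c (g t)) B"
    using gBc injg by (subst finprod_reindex) (auto simp: B_def intro: inj_on_subset)
  have prF: "finprod G (\<lambda>s. s [^] c s) F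
      = finprod G (\<lambda>s. s [^] c s) A \<otimes> finprod G (\<lambda>t. g t [^] c (g t)) B"
    unfolding FAB using finA finB disj Ac gBc
    by (subst finprod_Un_disjoint) (auto simp: prgB Pi_def subset_eq)
  define c1 where "c1 t = (if t \<in> A then c t * p else c (g t))" for t
  have "finprod G (\<lambda>t. t [^] c1 t) (A \<union> B)
      = finprod G (\<lambda>t. t [^] (c t * p)) A \<otimes> finprod G (\<lambda>t. t [^] c (g t)) B"
  proof -
    have "finprod G (\<lambda>t. t [^] c1 t) (A \<union> B)
      = finprod G (\<lambda>t. t [^] c1 t) A \<otimes> finprod G (\<lambda>t. t [^] c1 t) B"
      using finA finB AB Ac Bc by (subst finprod_Un_disjoint) (auto simp: Pi_def subset_eq)
    moreover have "finprod G (\<lambda>t. t [^] c1 t) A = finprod G (\<lambda>t. t [^] (c t * p)) A"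
      using Ac by (intro finprod_cong') (auto simp: c1_def Pi_def subset_eq)
    moreover have "finprod G (\<lambda>t. t [^] c1 t) B = finprod G (\<lambda>t. t [^] c (g t)) B"
      using Bc AB by (intro finprod_cong') (auto simp: c1_def Pi_def subset_eq)
    ultimately show ?thesis by simp
  qed
  also have "finprod G (\<lambda>t. t [^] (c t * p)) A = (finprod G (\<lambda>s. s [^] c s) A) [^] p"
    using finA Ac by (subst finprod_pow_nat) (auto intro!: finprod_cong simp: nat_pow_pow subset_eq)
  also have "finprod G (\<lambda>t. t [^] c (g t)) B = (finprod G (\<lambda>t. g t [^] c (g t)) B) [^] p"
  proof -
    have "finprod G (\<lambda>t. t [^] c (g t)) B = finprod G (\<lambda>t. (g t [^] c (g t)) [^] p) B"
    proof (intro finprod_cong')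
      fix t assume "t \<in> B"
      then have t: "t \<in> Tp" by (simp add: B_def)
      have gc: "g t \<in> carrier G" and gp: "g t [^] p = t" using g[OF t] by auto
      have "(g t [^] c (g t)) [^] p = g t [^] (p * c (g t))"
        using gc by (simp add: nat_pow_pow mult.commute)
      also have "\<dots> = (g t [^] p) [^] c (g t)" using gc by (simp add: nat_pow_pow)
      finally show "t [^] c (g t) = (g t [^] c (g t)) [^] p" using gp by simp
    qed (use g in \<open>auto simp: Pi_def B_def\<close>)
    also have "\<dots> = (finprod G (\<lambda>t. g t [^] c (g t)) B) [^] p"
      using finB g by (subst finprod_pow_nat) (auto simp: B_def)
    finally show ?thesis .
  qed
  also have "(finprod G (\<lambda>s. s [^] c s) A) [^] p \<otimes> (finprod G (\<lambda>t. g t [^] c (g t)) B) [^] p = \<one>"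
    using pr prF Ac gBc finA finB
    by (simp add: nat_pow_distrib[symmetric] finprod_closed Pi_def subset_eq g B_def)
  finally have pr1: "finprod G (\<lambda>t. t [^] c1 t) (A \<union> B) = \<one>" .
  have ABT: "A \<union> B \<subseteq> T" by (auto simp: A_def B_def Tp_def Tq_def)
  have all1: "\<forall>t\<in>A \<union> B. t [^] c1 t = \<one>"
    using indT pr1 finA finB ABT unfolding indep_def by blast
  have hA: "t [^] c t = \<one>" if tA: "t \<in> A" for t
  proof -
    have tc: "t \<in> carrier G" using tA Ac by auto
    have "t [^] c1 t = \<one>" using all1 tA by blast
    then have "t [^] (c t * p) = \<one>" using tA by (simp add: c1_def)
    then have "ord t dvd c t * p" using pow_eq_id[OF tc] by simp
    moreover have "coprime (ord t) p" using copq tA by (auto simp: A_def coprime_commute)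
    ultimately have "ord t dvd c t" using coprime_dvd_mult_left_iff by blast
    then show ?thesis using pow_eq_id[OF tc] by simp
  qed
  have prA: "finprod G (\<lambda>s. s [^] c s) A = \<one>" using hA by (intro finprod_one_eqI) auto
  have prB: "finprod G (\<lambda>t. g t [^] c (g t)) B = \<one>"
    using prF pr prA gBc finB by (simp add: finprod_closed Pi_def subset_eq g B_def)
  have hB1: "ord t dvd c (g t)" if tB: "t \<in> B" for t
  proof -
    have tc: "t \<in> carrier G" using tB Bc by auto
    have "t [^] c1 t = \<one>" using all1 tB by blast
    moreover have "t \<notin> A" using tB AB by blast
    ultimately have "t [^] c (g t) = \<one>" by (simp add: c1_def)
    then show ?thesis using pow_eq_id[OF tc] by simp
  qed
  define j where "j t = c (g t) div ord t" for t
  define c2 where "c2 t = (ord t div p) * j t" for t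
  have cgt: "c (g t) = p * c2 t" if tB: "t \<in> B" for t
  proof -
    have t: "t \<in> Tp" using tB by (simp add: B_def)
    have "c (g t) = ord t * j t" using hB1[OF tB] by (simp add: j_def)
    moreover have "ord t = p * (ord t div p)" using ordTp[OF t] by simp
    ultimately show ?thesis unfolding c2_def by (metis mult.assoc)
  qed
  have gpow: "g t [^] c (g t) = t [^] c2 t" if tB: "t \<in> B" for t
  proof -
    have t: "t \<in> Tp" using tB by (simp add: B_def)
    have gc: "g t \<in> carrier G" and gp: "g t [^] p = t" using g[OF t] by auto
    have "(g t [^] p) [^] c2 t = g t [^] c (g t)" using gc cgt[OF tB] by (simp add: nat_pow_pow)
    then show ?thesis using gp by simp
  qed
  have "finprod G (\<lambda>t. t [^] c2 t) B = \<one>"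
  proof -
    have "finprod G (\<lambda>t. g t [^] c (g t)) B = finprod G (\<lambda>t. t [^] c2 t) B"
      using gpow Bc by (intro finprod_cong') (auto simp: Pi_def subset_eq)
    then show ?thesis using prB by simp
  qed
  then have all2: "\<forall>t\<in>B. t [^] c2 t = \<one>"
    using indT finB ABT unfolding indep_def by blast
  have hB: "g t [^] c (g t) = \<one>" if tB: "t \<in> B" for t
    using gpow[OF tB] all2 tB by simp
  show "\<forall>s\<in>F. s [^] c s = \<one>"
  proof
    fix s assume "s \<in> F"
    then have "s \<in> A \<or> (\<exists>t\<in>B. s = g t)" using FAB by blast
    then show "s [^] c s = \<one>" using hA hB by blast
  qed
qed

end


context comm_group begin

lemma structure_exp:
  fixes d :: nat
  assumes "0 < d" "subgroup H G" "\<forall>x\<in>H. x [^] d = \<one>"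
  shows "\<exists>S \<subseteq> H. indep S \<and> H \<subseteq> spn S \<and>
           (\<forall>s\<in>S. (\<exists>p k. prime p \<and> k \<ge> 1 \<and> ord s = p ^ k) \<and> ord s dvd d)"
  using assms
proof (induction d arbitrary: H rule: less_induct)
  case (less d)
  have sH: "subgroup H G" using less.prems by simp
  have Hc: "H \<subseteq> carrier G" using sH subgroup.subset by blast
  have expH: "\<And>x. x \<in> H \<Longrightarrow> x [^] d = \<one>" using less.prems by simp
  show ?case
  proof (cases "d = 1")
    case True
    have "H \<subseteq> spn {}"
    proof
      fix x assume "x \<in> H"
      then have "x = \<one>" using expH[of x] True Hc by auto
      then show "x \<in> spn {}" using spn_one by simp
    qed
    moreover have "indep {}" unfolding indep_def by auto
    ultimately show ?thesis by blast
  next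
    case False
    obtain p where p: "prime p" "p dvd d" using prime_factor_nat[OF False] by blast
    define m where "m = d div p"
    have dm: "d = p * m" using p by (simp add: m_def)
    have p1: "1 < p" using prime_gt_1_nat[OF p(1)] .
    have m0: "0 < m" using dm less.prems(1) by (cases m) auto
    have md: "m < d" using dm p1 m0 by simp
    define H' where "H' = (\<lambda>x. x [^] p) ` H"
    have sH': "subgroup H' G" unfolding H'_def by (rule sub_pow_image[OF sH])
    have H'H: "H' \<subseteq> H" unfolding H'_def using sH by (auto intro: sub_pow_closed)
    have eH': "\<forall>y\<in>H'. y [^] m = \<one>"
    proof
      fix y assume "y \<in> H'"
      then obtain x where x: "x \<in> H" "y = x [^] p" by (auto simp: H'_def)
      then show "y [^] m = \<one>" using Hc expH[OF x(1)] dm by (auto simp: nat_pow_pow)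
    qed
    obtain T where T: "T \<subseteq> H'" "indep T" "H' \<subseteq> spn T"
      "\<forall>s\<in>T. (\<exists>q k. prime q \<and> k \<ge> 1 \<and> ord s = q ^ k) \<and> ord s dvd m"
      using less.IH[OF md m0 sH' eH'] by blast
    have Tc: "T \<subseteq> carrier G" using T(1) H'H Hc by blast
    define Tp where "Tp = {t\<in>T. p dvd ord t}"
    define Tq where "Tq = {t\<in>T. \<not> p dvd ord t}"
    define g where "g t = (SOME x. x \<in> H \<and> x [^] p = t)" for t
    have g: "g t \<in> H \<and> g t [^] p = t" if "t \<in> T" for t
    proof -
      have "\<exists>x. x \<in> H \<and> x [^] p = t" using that T(1) by (auto simp: H'_def)
      then show ?thesis unfolding g_def by (rule someI_ex)
    qed
    have ordTp: "\<exists>e\<ge>1. ord t = p ^ e \<and> ord (g t) = p ^ (e+1)" if tp: "t \<in> Tp" for t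
    proof -
      have tT: "t \<in> T" using tp by (simp add: Tp_def)
      obtain q k where qk: "prime q" "k \<ge> 1" "ord t = q ^ k" using T(4) tT by blast
      have "p dvd q ^ k" using tp qk by (simp add: Tp_def)
      then have "p dvd q" using p(1) prime_dvd_power by blast
      then have "p = q" using p(1) qk(1) primes_dvd_imp_eq by blast
      then have "ord (g t) = p ^ (k+1)"
        using qk p(1) Tc tT g[OF tT] Hc by (intro ord_lift[where t = t]) auto
      then show ?thesis using qk \<open>p = q\<close> by blast
    qed
    have gc: "g t \<in> carrier G \<and> g t [^] p = t" if "t \<in> Tp" for t
      using g[of t] that Hc by (auto simp: Tp_def)
    have ordTp': "ord (g t) = p * ord t \<and> p dvd ord t \<and> 0 < ord t" if "t \<in> Tp" for t
      using ordTp[OF that] p1 by (auto simp: Tp_def)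
    define S1 where "S1 = Tq \<union> g ` Tp"
    have indS1: "indep S1" unfolding S1_def
      by (rule indep_S1[OF p(1) Tc T(2) Tp_def Tq_def gc ordTp'])
    have S1H: "S1 \<subseteq> H" unfolding S1_def using T(1) H'H g by (auto simp: Tq_def Tp_def)
    have S1c: "S1 \<subseteq> carrier G" using S1H Hc by blast
    define Hp where "Hp = {x\<in>H. x [^] p = \<one>}"
    define Kp where "Kp = spn S1 \<inter> Hp"
    obtain Z where Z: "Z \<subseteq> Hp - {\<one>}" "relind Kp Z" "Hp \<subseteq> spn (Kp \<union> Z)"
      using complement[OF sH p(1), of Kp] by (auto simp: Kp_def Hp_def)
    define S where "S = S1 \<union> Z"
    have SH: "S \<subseteq> H" using S1H Z(1) by (auto simp: S_def Hp_def)
    have Sc: "S \<subseteq> carrier G" using SH Hc by blast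
    have sHp: "subgroup Hp G" unfolding Hp_def by (rule sub_torsion[OF sH])
    have spnS1H: "spn S1 \<subseteq> H" by (rule spn_subgroup[OF sH S1H])
    have indS: "indep S" unfolding indep_def
    proof (intro allI impI)
      fix F c assume F: "finite F" "F \<subseteq> S" and pr: "finprod G (\<lambda>s. s [^] (c s :: nat)) F = \<one>"
      define F1 where "F1 = F \<inter> S1"
      define F2 where "F2 = F - S1"
      have F2Z: "F2 \<subseteq> Z" using F by (auto simp: F2_def S_def)
      have fin: "finite F1" "finite F2" using F by (auto simp: F1_def F2_def)
      have F1c: "F1 \<subseteq> carrier G" using F Sc by (auto simp: F1_def)
      have F2c: "F2 \<subseteq> carrier G" using F Sc by (auto simp: F2_def)
      define y1 where "y1 = finprod G (\<lambda>s. s [^] c s) F1"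
      define y2 where "y2 = finprod G (\<lambda>s. s [^] c s) F2"
      have y1c: "y1 \<in> carrier G" and y2c: "y2 \<in> carrier G"
        using F1c F2c by (auto simp: y1_def y2_def intro!: finprod_closed)
      have FF: "F1 \<union> F2 = F" by (auto simp: F1_def F2_def)
      have "finprod G (\<lambda>s. s [^] c s) (F1 \<union> F2) = y1 \<otimes> y2"
        unfolding y1_def y2_def
        by (rule finprod_Un_disjoint) (use fin F1c F2c in \<open>auto simp: F1_def F2_def\<close>)
      then have y12: "y1 \<otimes> y2 = \<one>" using pr FF by simp
      have y1S: "y1 \<in> spn S1" unfolding y1_def using fin by (intro spnI) (auto simp: F1_def)
      have y1H: "y1 \<in> H" using y1S spnS1H by blast
      have y2Hp: "y2 \<in> Hp" unfolding y2_def using fin F2Z Z(1)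
        by (intro sub_finprod[OF sHp]) (auto intro: sub_pow_closed[OF sHp])
      have "inv y1 = y2" using y12 y1c y2c by (simp add: inv_equality m_comm)
      moreover have "inv y1 = y1 [^] (d - 1)" using y1H expH less.prems(1) Hc by (intro inv_pow_exp) auto
      ultimately have "y2 \<in> spn S1" using spn_pow[OF S1c y1S, of "d - 1"] by simp
      then have "y2 \<in> Kp" using y2Hp by (simp add: Kp_def)
      then have h2: "\<forall>s\<in>F2. s [^] c s = \<one>" using Z(2) fin F2Z unfolding relind_def y2_def by blast
      then have "y2 = \<one>" unfolding y2_def by (intro finprod_one_eqI) auto
      then have "y1 = \<one>" using y12 y1c by simp
      then have h1: "\<forall>s\<in>F1. s [^] c s = \<one>" using indS1 fin unfolding indep_def y1_def F1_def by blast
      show "\<forall>s\<in>F. s [^] c s = \<one>" using h1 h2 by (auto simp: F1_def F2_def)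
    qed
    have genS: "H \<subseteq> spn S"
    proof
      fix x assume xH: "x \<in> H"
      have xc: "x \<in> carrier G" using xH Hc by blast
      have "x [^] p \<in> spn T" using xH T(3) by (auto simp: H'_def)
      then obtain F c where F: "finite F" "F \<subseteq> T" "x [^] p = finprod G (\<lambda>t. t [^] (c t :: nat)) F"
        unfolding spn_def by blast
      have Fc: "F \<subseteq> carrier G" using F Tc by blast
      define u where "u t = (SOME v. [p * v = Suc 0] (mod ord t))" for t
      have u: "[p * u t = Suc 0] (mod ord t)" if "t \<in> Tq" for t
      proof -
        have "coprime p (ord t)" using that p(1) by (auto simp: Tq_def intro: prime_imp_coprime)
        then show ?thesis unfolding u_def by (rule someI_ex[OF cong_solve_coprime_nat])
      qed
      define h where "h t = (if t \<in> Tp then g t [^] c t else t [^] (u t * c t))" for t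
      have hS: "h t \<in> spn S1" if "t \<in> F" for t
      proof (cases "t \<in> Tp")
        case True
        then have "g t \<in> spn S1" using S1c by (intro spn_base) (auto simp: S1_def)
        then show ?thesis using True spn_pow[OF S1c] by (simp add: h_def)
      next
        case False
        then have "t \<in> Tq" using that F by (auto simp: Tq_def Tp_def)
        then have "t \<in> spn S1" using S1c by (intro spn_base) (auto simp: S1_def)
        then show ?thesis using False spn_pow[OF S1c] by (simp add: h_def)
      qed
      define k where "k = finprod G h F"
      have kS: "k \<in> spn S1" unfolding k_def using F hS by (intro spn_finprod[OF S1c])
      have kc: "k \<in> carrier G" using kS spn_carrier[OF S1c] by blast
      have hc: "h \<in> F \<rightarrow> carrier G" using hS spn_carrier[OF S1c] by blast
      have "k [^] p = finprod G (\<lambda>t. h t [^] p) F"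
        unfolding k_def by (rule finprod_pow_nat[OF F(1) hc])
      also have "\<dots> = finprod G (\<lambda>t. t [^] c t) F"
      proof (intro finprod_cong')
        fix t assume tF: "t \<in> F"
        have tc: "t \<in> carrier G" using tF Fc by blast
        show "h t [^] p = t [^] c t"
        proof (cases "t \<in> Tp")
          case True
          have gt: "g t \<in> carrier G" "g t [^] p = t" using gc[OF True] by auto
          have "h t [^] p = g t [^] (c t * p)" using True gt(1) by (simp add: h_def nat_pow_pow)
          also have "\<dots> = (g t [^] p) [^] c t" using gt(1) by (simp add: nat_pow_pow mult.commute)
          finally show ?thesis using gt by simp
        next
          case False
          then have tq: "t \<in> Tq" using tF F by (auto simp: Tq_def Tp_def)
          have "h t [^] p = t [^] ((p * u t) * c t)" using False tc by (simp add: h_def nat_pow_pow mult_ac)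
          also have "\<dots> = (t [^] (p * u t)) [^] c t" using tc by (simp add: nat_pow_pow)
          also have "t [^] (p * u t) = t [^] ((p * u t) mod ord t)"
            using tc by (intro pow_mod_exp) auto
          also have "(p * u t) mod ord t = Suc 0 mod ord t" using u[OF tq] by (simp add: cong_def)
          also have "Suc 0 mod ord t = 1"
          proof -
            obtain q e where qe: "prime q" "e \<ge> 1" "ord t = q ^ e" using T(4) tq by (auto simp: Tq_def)
            have "1 < q" using prime_gt_1_nat[OF qe(1)] .
            then have "1 < ord t" using qe(2,3) one_less_power[of q e] by simp
            then show ?thesis by simp
          qed
          finally show ?thesis using tc by simp
        qed
      qed (use Fc in auto)
      finally have kp: "k [^] p = x [^] p" using F(3) by simp
      define z where "z = x \<otimes> inv k"
      have zc: "z \<in> carrier G" using xc kc by (simp add: z_def)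
      have kH: "k \<in> H" using kS spnS1H by blast
      have zH: "z \<in> H" using xH kH sH by (simp add: z_def subgroup.m_closed subgroup.m_inv_closed)
      have "z [^] p = x [^] p \<otimes> inv (k [^] p)" using xc kc by (simp add: z_def nat_pow_distrib nat_pow_inv)
      then have "z [^] p = \<one>" using kp xc by simp
      then have "z \<in> Hp" using zH by (simp add: Hp_def)
      then have zS: "z \<in> spn (Kp \<union> Z)" using Z(3) by blast
      have "Kp \<union> Z \<subseteq> spn S"
      proof -
        have "Kp \<subseteq> spn S" using spn_mono[of S1 S] by (auto simp: Kp_def S_def)
        moreover have "Z \<subseteq> spn S" using spn_base[OF Sc] by (auto simp: S_def)
        ultimately show ?thesis by blast
      qed
      then have zS': "z \<in> spn S" using spn_mono_sub[OF Sc] zS by blast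
      have kS': "k \<in> spn S" using kS spn_mono[of S1 S] by (auto simp: S_def)
      have "x = z \<otimes> k" using xc kc by (simp add: z_def m_assoc)
      then show "x \<in> spn S" using spn_mult[OF Sc zS' kS'] by simp
    qed
    have ordS: "(\<exists>q k. prime q \<and> k \<ge> 1 \<and> ord s = q ^ k) \<and> ord s dvd d" if sS: "s \<in> S" for s
    proof -
      consider "s \<in> Tq" | t where "t \<in> Tp" "s = g t" | "s \<in> Z" using sS by (auto simp: S_def S1_def)
      then show ?thesis
      proof cases
        case 1
        then show ?thesis using T(4) dm by (auto simp: Tq_def intro: dvd_mult2)
      next
        case 2
        obtain e where e: "e \<ge> 1" "ord t = p ^ e" "ord (g t) = p ^ (e+1)" using ordTp[OF 2(1)] by blast
        have "ord t dvd m" using T(4) 2(1) by (auto simp: Tp_def)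
        then have "p * ord t dvd d" using dm by simp
        then show ?thesis using e 2 p(1) by (metis le_add2 mult.commute power_Suc power_add power_one_right)
      next
        case 3
        have sc: "s \<in> carrier G" using 3 Z(1) Hc by (auto simp: Hp_def)
        have "s [^] p = \<one>" "s \<noteq> \<one>" using 3 Z(1) by (auto simp: Hp_def)
        then have "ord s dvd p" "ord s \<noteq> 1" using pow_eq_id[OF sc] ord_eq_1[OF sc] by auto
        then have "ord s = p" using p(1) by (metis prime_nat_iff)
        then show ?thesis using p by (metis order_refl power_one_right)
      qed
    qed
    show ?thesis using SH indS genS ordS by blast
  qed
qed

end


context comm_group begin

lemma cyc_hom:
  assumes xc: "x \<in> carrier G" and n: "n = ord x" "0 < n"
  shows "(\<lambda>k::int. x [^] nat k) \<in> hom (integer_mod_group n) G"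
proof (rule homI)
  fix k assume "k \<in> carrier (integer_mod_group n)"
  show "x [^] nat k \<in> carrier G" using xc by simp
next
  fix k l assume k: "k \<in> carrier (integer_mod_group n)" and l: "l \<in> carrier (integer_mod_group n)"
  have k0: "0 \<le> k" and l0: "0 \<le> l" using k l n by (auto simp: carrier_integer_mod_group)
  have "nat ((k + l) mod int n) = (nat k + nat l) mod n"
    using k0 l0 by (simp add: nat_mod_distrib nat_add_distrib)
  then have "x [^] nat ((k + l) mod int n) = x [^] (nat k + nat l)"
    using pow_mod_exp[OF xc, of n "nat k + nat l"] n xc by simp
  then show "x [^] nat (k \<otimes>\<^bsub>integer_mod_group n\<^esub> l) = x [^] nat k \<otimes> x [^] nat l"
    using xc by (simp add: nat_pow_mult)
qed

lemma bounded_decomp: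
  fixes d :: nat
  assumes cG: "countable (carrier G)" and d: "0 < d" and ex: "\<forall>x\<in>carrier G. x [^] d = \<one>"
  shows "\<exists>(I::nat set) n. (\<forall>i\<in>I. (\<exists>p k. prime p \<and> k \<ge> 1 \<and> n i = p ^ k) \<and> n i dvd d)
          \<and> G \<cong> sum_group I (\<lambda>i. integer_mod_group (n i))"
proof -
  obtain S where S: "S \<subseteq> carrier G" "indep S" "carrier G \<subseteq> spn S"
    "\<forall>s\<in>S. (\<exists>p k. prime p \<and> k \<ge> 1 \<and> ord s = p ^ k) \<and> ord s dvd d"
    using structure_exp[OF d subgroup_self ex] by blast
  define e where "e = to_nat_on (carrier G)"
  define g where "g = from_nat_into (carrier G)"
  define I where "I = e ` S"
  define n where "n i = ord (g i)" for i
  have ge: "g (e s) = s" if "s \<in> S" for s using that S(1) cG by (simp add: e_def g_def subset_iff)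
  have gI: "g i \<in> S" if "i \<in> I" for i using that ge by (auto simp: I_def)
  have eg: "e (g i) = i" if "i \<in> I" for i using that ge by (auto simp: I_def)
  have injg: "inj_on g I" by (rule inj_on_inverseI[where g=e]) (rule eg)
  have gc: "g i \<in> carrier G" if "i \<in> I" for i using gI[OF that] S(1) by blast
  have npos: "0 < n i" "1 < n i" if iI: "i \<in> I" for i
  proof -
    obtain p k where "prime p" "k \<ge> 1" "ord (g i) = p ^ k" using S(4) gI[OF iI] by blast
    moreover have "1 < p" using prime_gt_1_nat[OF calculation(1)] .
    ultimately show "1 < n i" using one_less_power[of p k] by (simp add: n_def)
    then show "0 < n i" by simp
  qed
  define Z where "Z i = integer_mod_group (n i)" for i
  define f where "f i = (\<lambda>k::int. g i [^] nat k)" for i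
  have fh: "f i \<in> hom (Z i) G" if "i \<in> I" for i
    unfolding f_def Z_def using gc[of i] npos[of i] that by (intro cyc_hom) (auto simp: n_def)
  define phi :: "(nat \<Rightarrow> int) \<Rightarrow> 'a" where "phi x = gfinprod G (\<lambda>i. f i (x i)) I" for x
  have grpZ: "group (Z i)" for i by (simp add: Z_def)
  have grpS: "group (sum_group I Z)" using grpZ by simp
  have hom: "phi \<in> hom (sum_group I Z) G"
    unfolding phi_def by (rule hom_group_sum) (use fh grpZ in auto)
  interpret gh: group_hom "sum_group I Z" G phi
    by (simp add: group_hom_def group_hom_axioms_def grpS hom is_group)
  have carrS: "carrier (sum_group I Z) = {x \<in> \<Pi>\<^sub>E i\<in>I. carrier (Z i). finite {i \<in> I. x i \<noteq> 0}}"
    using grpZ by (simp add: carrier_sum_group Z_def)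
  have phi_fin: "phi x = finprod G (\<lambda>i. f i (x i)) J"
    if J: "J \<subseteq> I" "finite J" "\<And>i. i \<in> I - J \<Longrightarrow> x i = 0" for x J
  proof -
    have fc: "(\<lambda>i. f i (x i)) \<in> I \<rightarrow> carrier G" using gc by (auto simp: f_def)
    have "gfinprod G (\<lambda>i. f i (x i)) J = gfinprod G (\<lambda>i. f i (x i)) I"
      by (rule gfinprod_mono_neutral_cong_left) (use J fc in \<open>auto simp: f_def\<close>)
    moreover have "gfinprod G (\<lambda>i. f i (x i)) J = finprod G (\<lambda>i. f i (x i)) J"
      using J fc by (intro gfinprod_eq_finprod) auto
    ultimately show ?thesis by (simp add: phi_def)
  qed
  have "phi \<in> iso (sum_group I Z) G"
    unfolding gh.iso_iff
  proof
    show "carrier G \<subseteq> phi ` carrier (sum_group I Z)"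
    proof
      fix y assume "y \<in> carrier G"
      then have "y \<in> spn S" using S(3) by blast
      then obtain F c where F: "finite F" "F \<subseteq> S" "y = finprod G (\<lambda>s. s [^] (c s :: nat)) F"
        unfolding spn_def by blast
      define x where "x = (\<lambda>i\<in>I. if g i \<in> F then int (c (g i) mod n i) else 0)"
      have eFI: "e ` F \<subseteq> I" using F by (auto simp: I_def)
      have xs: "x \<in> carrier (sum_group I Z)"
      proof -
        have "x \<in> (\<Pi>\<^sub>E i\<in>I. carrier (Z i))"
          using npos by (auto simp: x_def Z_def carrier_integer_mod_group)
        moreover have "{i \<in> I. x i \<noteq> 0} \<subseteq> e ` F"
        proof clarify
          fix i assume i: "i \<in> I" "x i \<noteq> 0"
          then have "g i \<in> F" by (auto simp: x_def split: if_splits)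
          then show "i \<in> e ` F" using eg[OF i(1)] by (metis image_eqI)
        qed
        then have "finite {i \<in> I. x i \<noteq> 0}" using F(1) finite_subset by blast
        ultimately show ?thesis using carrS by simp
      qed
      have "phi x = finprod G (\<lambda>i. f i (x i)) (e ` F)"
      proof (rule phi_fin[OF eFI finite_imageI[OF F(1)]])
        fix i assume i: "i \<in> I - e ` F"
        have "g i \<notin> F"
        proof
          assume "g i \<in> F" then have "e (g i) \<in> e ` F" by blast
          then show False using i eg by auto
        qed
        then show "x i = 0" using i by (simp add: x_def)
      qed
      also have "\<dots> = finprod G (\<lambda>s. f (e s) (x (e s))) F"
      proof -
        have "F \<subseteq> carrier G" using F(2) S(1) by blast
        then have "inj_on e F" unfolding e_def by (rule inj_on_subset[OF inj_on_to_nat_on[OF cG]])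
        then show ?thesis using eFI gc by (subst finprod_reindex) (auto simp: f_def Pi_def)
      qed
      also have "\<dots> = finprod G (\<lambda>s. s [^] c s) F"
      proof (intro finprod_cong')
        fix s assume sF: "s \<in> F"
        have sS: "s \<in> S" using sF F by blast
        have sc: "s \<in> carrier G" using sS S(1) by blast
        have eI: "e s \<in> I" using sS by (simp add: I_def)
        have "f (e s) (x (e s)) = s [^] (c s mod ord s)"
          using sF eI ge[OF sS] by (simp add: f_def x_def n_def)
        also have "\<dots> = s [^] c s" using pow_mod_exp[OF sc pow_ord_eq_1[OF sc]] by simp
        finally show "f (e s) (x (e s)) = s [^] c s" .
      qed (use F S(1) in auto)
      finally have "phi x = y" using F(3) by simp
      then show "y \<in> phi ` carrier (sum_group I Z)" using xs by blast
    qed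
  next
    show "\<forall>x\<in>carrier (sum_group I Z). phi x = \<one> \<longrightarrow> x = \<one>\<^bsub>sum_group I Z\<^esub>"
    proof (intro ballI impI)
      fix x assume xs: "x \<in> carrier (sum_group I Z)" and px: "phi x = \<one>"
      define J where "J = {i \<in> I. x i \<noteq> 0}"
      have xP: "x \<in> (\<Pi>\<^sub>E i\<in>I. carrier (Z i))" and finJ: "finite J"
        using xs carrS by (auto simp: J_def)
      have xr: "0 \<le> x i \<and> x i < int (n i)" if "i \<in> I" for i
        using xP that npos[OF that] by (auto simp: Z_def carrier_integer_mod_group PiE_iff)
      have "phi x = finprod G (\<lambda>i. f i (x i)) J"
        using finJ by (intro phi_fin) (auto simp: J_def)
      also have "\<dots> = finprod G (\<lambda>s. s [^] nat (x (e s))) (g ` J)"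
      proof -
        have "inj_on g J" using injg by (rule inj_on_subset) (auto simp: J_def)
        then have "finprod G (\<lambda>s. s [^] nat (x (e s))) (g ` J) = finprod G (\<lambda>i. g i [^] nat (x (e (g i)))) J"
          using gc by (subst finprod_reindex) (auto simp: J_def Pi_def)
        also have "\<dots> = finprod G (\<lambda>i. f i (x i)) J"
          using gc eg by (intro finprod_cong') (auto simp: J_def f_def Pi_def)
        finally show ?thesis by simp
      qed
      finally have pr: "finprod G (\<lambda>s. s [^] nat (x (e s))) (g ` J) = \<one>" using px by simp
      have gJ: "g ` J \<subseteq> S" using gI by (auto simp: J_def)
      have "\<forall>s\<in>g ` J. s [^] nat (x (e s)) = \<one>"
        using S(2)[unfolded indep_def, rule_format, OF finite_imageI[OF finJ] gJ pr] by blast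
      then have "J = {}"
      proof -
        assume all: "\<forall>s\<in>g ` J. s [^] nat (x (e s)) = \<one>"
        show "J = {}"
        proof (rule ccontr)
          assume "J \<noteq> {}" then obtain i where iJ: "i \<in> J" by blast
          have iI: "i \<in> I" using iJ by (simp add: J_def)
          have "g i \<in> g ` J" using iJ by blast
          then have "g i [^] nat (x (e (g i))) = \<one>" using all by blast
          then have "g i [^] nat (x i) = \<one>" using eg[OF iI] by simp
          then have "n i dvd nat (x i)" using pow_eq_id[OF gc[OF iI]] by (simp add: n_def)
          moreover have "nat (x i) < n i" using xr[OF iI] by linarith
          moreover have "nat (x i) \<noteq> 0" using xr[OF iI] iJ by (simp add: J_def)
          ultimately show False by (simp add: nat_dvd_not_less)
        qed
      qed
      then have "\<forall>i\<in>I. x i = 0" by (auto simp: J_def)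
      then show "x = \<one>\<^bsub>sum_group I Z\<^esub>"
      proof -
        assume z: "\<forall>i\<in>I. x i = 0"
        show ?thesis
        proof (rule ext)
          fix i show "x i = \<one>\<^bsub>sum_group I Z\<^esub> i"
            using z PiE_arb[OF xP, of i] by (cases "i \<in> I") (simp_all add: Z_def)
        qed
      qed
    qed
  qed
  then have "sum_group I Z \<cong> G" by (rule is_isoI)
  then have "G \<cong> sum_group I Z" by (rule group.iso_sym[OF grpS])
  moreover have "\<forall>i\<in>I. (\<exists>p k. prime p \<and> k \<ge> 1 \<and> n i = p ^ k) \<and> n i dvd d"
    using S(4) gI by (auto simp: n_def)
  ultimately show ?thesis unfolding Z_def by blast
qed

end


lemma (in group) quot_comm_exp:
  assumes N: "N \<lhd> G"
    and comm: "\<And>a b. a \<in> carrier G \<Longrightarrow> b \<in> carrier G \<Longrightarrow>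
                 a \<otimes>\<^bsub>G\<^esub> b \<otimes>\<^bsub>G\<^esub> inv\<^bsub>G\<^esub> a \<otimes>\<^bsub>G\<^esub> inv\<^bsub>G\<^esub> b \<in> N"
    and ex: "\<And>a. a \<in> carrier G \<Longrightarrow> a [^]\<^bsub>G\<^esub> (d::nat) \<in> N"
  shows "comm_group (G Mod N) \<and> (\<forall>X\<in>carrier (G Mod N). X [^]\<^bsub>G Mod N\<^esub> d = \<one>\<^bsub>G Mod N\<^esub>)"
proof -
  interpret normal N G by (rule N)
  have G: "group G" by (rule is_group)
  have sN: "subgroup N G" by (rule normal_imp_subgroup[OF N])
  have fg: "group (G Mod N)" by (rule factorgroup_is_group)
  have cm: "X \<otimes>\<^bsub>G Mod N\<^esub> Y = Y \<otimes>\<^bsub>G Mod N\<^esub> X"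
    if X: "X \<in> carrier (G Mod N)" and Y: "Y \<in> carrier (G Mod N)" for X Y
  proof -
    obtain a b where ab: "a \<in> carrier G" "b \<in> carrier G" "X = N #> a" "Y = N #> b"
      using X Y by (auto simp: carrier_FactGroup)
    have "(a \<otimes> b) \<otimes> inv (b \<otimes> a) \<in> N"
      using comm[OF ab(1,2)] ab by (simp add: inv_mult_group m_assoc)
    then have "a \<otimes> b \<in> N #> (b \<otimes> a)"
      using ab by (intro rcos_module_rev[OF G]) auto
    then have "N #> (b \<otimes> a) = N #> (a \<otimes> b)"
      using ab by (intro repr_independence[OF _ _ sN]) auto
    then show ?thesis using ab by (simp add: rcos_sum)
  qed
  have "comm_group (G Mod N)"
    using fg cm by (simp add: group.group_comm_groupI)
  moreover have "X [^]\<^bsub>G Mod N\<^esub> d = \<one>\<^bsub>G Mod N\<^esub>" if X: "X \<in> carrier (G Mod N)" for X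
  proof -
    obtain a where a: "a \<in> carrier G" "X = N #> a" using X by (auto simp: carrier_FactGroup)
    have "X [^]\<^bsub>G Mod N\<^esub> d = N #> (a [^] d)" using FactGroup_pow[OF a(1)] a by simp
    also have "\<dots> = N" using ex[OF a(1)] rcos_const[OF G] by simp
    finally show ?thesis by simp
  qed
  ultimately show ?thesis by blast
qed


definition comb :: "real set \<Rightarrow> ('n::finite \<Rightarrow> real^'m) \<Rightarrow> (real^'m) set" where
  "comb A c = {\<Sum>i\<in>UNIV. z i *\<^sub>R c i | z. \<forall>i. z i \<in> A}"

lemma sum_closed_gen:
  assumes "finite F" "0 \<in> V" "\<And>x y. x \<in> V \<Longrightarrow> y \<in> V \<Longrightarrow> x + y \<in> V" "\<And>i. i \<in> F \<Longrightarrow> f i \<in> V"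
  shows "sum f F \<in> V"
  using assms(1,4) by (induction F rule: finite_induct) (auto simp: assms(2,3))

locale ring_set =
  fixes A :: "real set"
  assumes zero: "0 \<in> A" and one: "1 \<in> A" and add: "\<And>x y. x \<in> A \<Longrightarrow> y \<in> A \<Longrightarrow> x + y \<in> A"
    and mult: "\<And>x y. x \<in> A \<Longrightarrow> y \<in> A \<Longrightarrow> x * y \<in> A" and neg: "\<And>x. x \<in> A \<Longrightarrow> -x \<in> A"
begin

lemma comb_zero: "0 \<in> comb A c"
  unfolding comb_def by (intro CollectI exI[of _ "\<lambda>_. 0"]) (simp add: zero)

lemma comb_add:
  fixes c :: "'n::finite \<Rightarrow> real^'m"
  shows "x \<in> comb A c \<Longrightarrow> y \<in> comb A c \<Longrightarrow> x + y \<in> comb A c"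
  unfolding comb_def
proof clarify
  fix z w :: "'n \<Rightarrow> real" assume z: "\<forall>i. z i \<in> A" and w: "\<forall>i. w i \<in> A"
  have "(\<Sum>i\<in>UNIV. z i *\<^sub>R c i) + (\<Sum>i\<in>UNIV. w i *\<^sub>R c i) = (\<Sum>i\<in>UNIV. (z i + w i) *\<^sub>R c i)"
    by (simp add: sum.distrib scaleR_add_left)
  then show "\<exists>u. (\<Sum>i\<in>UNIV. z i *\<^sub>R c i) + (\<Sum>i\<in>UNIV. w i *\<^sub>R c i) = (\<Sum>i\<in>UNIV. u i *\<^sub>R c i) \<and> (\<forall>i. u i \<in> A)"
    using z w add by (intro exI[of _ "\<lambda>i. z i + w i"]) auto
qed

lemma comb_scale:
  fixes c :: "'n::finite \<Rightarrow> real^'m"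
  shows "a \<in> A \<Longrightarrow> x \<in> comb A c \<Longrightarrow> a *\<^sub>R x \<in> comb A c"
  unfolding comb_def
proof clarify
  fix z :: "'n \<Rightarrow> real" assume a: "a \<in> A" and z: "\<forall>i. z i \<in> A"
  have "a *\<^sub>R (\<Sum>i\<in>UNIV. z i *\<^sub>R c i) = (\<Sum>i\<in>UNIV. (a * z i) *\<^sub>R c i)"
    by (simp add: scaleR_sum_right)
  then show "\<exists>u. a *\<^sub>R (\<Sum>i\<in>UNIV. z i *\<^sub>R c i) = (\<Sum>i\<in>UNIV. u i *\<^sub>R c i) \<and> (\<forall>i. u i \<in> A)"
    using z a mult by (intro exI[of _ "\<lambda>i. a * z i"]) auto
qed


lemma comb_neg: "x \<in> comb A c \<Longrightarrow> - x \<in> comb A c"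
  using comb_scale[OF neg[OF one]] by simp

lemma comb_diff: "x \<in> comb A c \<Longrightarrow> y \<in> comb A c \<Longrightarrow> x - y \<in> comb A c"
  using comb_add[of x c "-y"] comb_neg[of y c] by simp

lemma comb_base: "c i \<in> comb A c"
proof -
  have "(\<Sum>j\<in>UNIV. (if j = i then 1 else 0) *\<^sub>R c j) = (\<Sum>j\<in>UNIV. if j = i then c j else 0)"
    by (intro sum.cong) auto
  then have "(\<Sum>j\<in>UNIV. (if j = i then 1 else 0) *\<^sub>R c j) = c i" by simp
  then show ?thesis unfolding comb_def using zero one
    by (intro CollectI exI[of _ "\<lambda>j. if j = i then 1 else 0"]) auto
qed

lemma comb_subspace:
  assumes "0 \<in> V" "\<And>x y. x \<in> V \<Longrightarrow> y \<in> V \<Longrightarrow> x + y \<in> V"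
    "\<And>a x. a \<in> A \<Longrightarrow> x \<in> V \<Longrightarrow> a *\<^sub>R x \<in> V" "\<And>i. c i \<in> V"
  shows "comb A c \<subseteq> V"
proof
  fix x assume "x \<in> comb A c"
  then obtain z where z: "\<forall>i. z i \<in> A" "x = (\<Sum>i\<in>UNIV. z i *\<^sub>R c i)" unfolding comb_def by blast
  show "x \<in> V" unfolding z(2) using assms z(1) by (intro sum_closed_gen) auto
qed

lemma comb_image:
  "(\<lambda>x. M *v x) ` comb A c = comb A (\<lambda>i. M *v c i)"
proof -
  have eq: "M *v (\<Sum>i\<in>F. z i *\<^sub>R c i) = (\<Sum>i\<in>F. z i *\<^sub>R (M *v c i))" if "finite F" for F z
    using that by (induction F rule: finite_induct) (simp_all add: matrix_vector_right_distrib matrix_vector_mult_scaleR)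
  show ?thesis
  proof
    show "(\<lambda>x. M *v x) ` comb A c \<subseteq> comb A (\<lambda>i. M *v c i)"
    proof clarify
      fix x assume "x \<in> comb A c"
      then obtain z where z: "\<forall>i. z i \<in> A" "x = (\<Sum>i\<in>UNIV. z i *\<^sub>R c i)" unfolding comb_def by blast
      show "M *v x \<in> comb A (\<lambda>i. M *v c i)" unfolding comb_def z(2) eq[OF finite_class.finite_UNIV]
        using z(1) by (intro CollectI exI[of _ z]) simp
    qed
    show "comb A (\<lambda>i. M *v c i) \<subseteq> (\<lambda>x. M *v x) ` comb A c"
    proof
      fix y assume "y \<in> comb A (\<lambda>i. M *v c i)"
      then obtain z where z: "\<forall>i. z i \<in> A" "y = (\<Sum>i\<in>UNIV. z i *\<^sub>R (M *v c i))" unfolding comb_def by blast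
      have "(\<Sum>i\<in>UNIV. z i *\<^sub>R c i) \<in> comb A c" unfolding comb_def using z(1) by (intro CollectI exI[of _ z]) simp
      moreover have "y = M *v (\<Sum>i\<in>UNIV. z i *\<^sub>R c i)" using z(2) eq[OF finite_class.finite_UNIV] by simp
      ultimately show "y \<in> (\<lambda>x. M *v x) ` comb A c" by blast
    qed
  qed
qed

end

interpretation Ints_rs: ring_set "\<int> :: real set"
  by unfold_locales auto

interpretation Rats_rs: ring_set "\<rat> :: real set"
  by unfold_locales auto

lemma comb_mono: "A \<subseteq> B \<Longrightarrow> comb A c \<subseteq> comb B c"
  unfolding comb_def by blast

lemma Ints_sub_Rats: "(\<int> :: real set) \<subseteq> \<rat>"
  using Ints_subset_Rats by blast

lemma lattice_comb:
  "range (\<lambda>k :: 'n::finite \<Rightarrow> int. \<Sum>i\<in>UNIV. of_int (k i) *\<^sub>R b i) = comb \<int> b"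
proof -
  have "\<exists>k. (\<Sum>i\<in>UNIV. z i *\<^sub>R b i) = (\<Sum>i\<in>UNIV. of_int (k i) *\<^sub>R b i)" if "\<forall>i. z i \<in> \<int>" for z :: "'n \<Rightarrow> real"
  proof -
    have "\<forall>i. z i = of_int \<lfloor>z i\<rfloor>" using that by (auto elim: Ints_cases)
    then have "(\<Sum>i\<in>UNIV. z i *\<^sub>R b i) = (\<Sum>i\<in>UNIV. of_int \<lfloor>z i\<rfloor> *\<^sub>R b i)" by simp
    then show ?thesis by (intro exI[of _ "\<lambda>i. \<lfloor>z i\<rfloor>"])
  qed
  moreover have "(\<Sum>i\<in>UNIV. of_int (k i) *\<^sub>R b i) \<in> comb \<int> b" for k :: "'n \<Rightarrow> int"
    unfolding comb_def by (intro CollectI exI[of _ "\<lambda>i. of_int (k i)"]) simp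
  ultimately show ?thesis unfolding comb_def
  proof -
    assume h1: "\<And>z. \<forall>i. z i \<in> \<int> \<Longrightarrow> \<exists>k. (\<Sum>i\<in>UNIV. z i *\<^sub>R b i) = (\<Sum>i\<in>UNIV. real_of_int (k i) *\<^sub>R b i)"
      and h2: "\<And>k. (\<Sum>i\<in>UNIV. real_of_int (k i) *\<^sub>R b i) \<in> {\<Sum>i\<in>UNIV. z i *\<^sub>R b i |z. \<forall>i. z i \<in> \<int>}"
    show "range (\<lambda>k. \<Sum>i\<in>UNIV. real_of_int (k i) *\<^sub>R b i) = {\<Sum>i\<in>UNIV. z i *\<^sub>R b i |z. \<forall>i. z i \<in> \<int>}"
    proof
      show "range (\<lambda>k. \<Sum>i\<in>UNIV. real_of_int (k i) *\<^sub>R b i) \<subseteq> {\<Sum>i\<in>UNIV. z i *\<^sub>R b i |z. \<forall>i. z i \<in> \<int>}"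
        using h2 by blast
    next
      show "{\<Sum>i\<in>UNIV. z i *\<^sub>R b i |z. \<forall>i. z i \<in> \<int>} \<subseteq> range (\<lambda>k. \<Sum>i\<in>UNIV. real_of_int (k i) *\<^sub>R b i)"
      proof clarify
        fix z :: "'n \<Rightarrow> real" assume "\<forall>i. z i \<in> \<int>"
        then obtain k where "(\<Sum>i\<in>UNIV. z i *\<^sub>R b i) = (\<Sum>i\<in>UNIV. real_of_int (k i) *\<^sub>R b i)" using h1 by blast
        then show "(\<Sum>i\<in>UNIV. z i *\<^sub>R b i) \<in> range (\<lambda>k. \<Sum>i\<in>UNIV. real_of_int (k i) *\<^sub>R b i)" by simp
      qed
    qed
  qed
qed


lemma rat_denom: "q \<in> (\<rat>::real set) \<Longrightarrow> \<exists>n::nat. 0 < n \<and> real n * q \<in> \<int>"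
proof -
  assume "q \<in> \<rat>"
  then obtain a b where ab: "b > 0" "q = of_int a / of_int b" by (elim Rats_cases') blast
  then have "real (nat b) * q = of_int a" by simp
  then show ?thesis using ab by (intro exI[of _ "nat b"]) auto
qed

lemma comb_denom:
  fixes c :: "'n::finite \<Rightarrow> real^'m"
  assumes "x \<in> comb \<rat> c" shows "\<exists>N::nat. 0 < N \<and> real N *\<^sub>R x \<in> comb \<int> c"
proof -
  obtain q where q: "\<forall>i. q i \<in> \<rat>" "x = (\<Sum>i\<in>UNIV. q i *\<^sub>R c i)" using assms unfolding comb_def by blast
  define n where "n i = (SOME n::nat. 0 < n \<and> real n * q i \<in> \<int>)" for i
  have n: "0 < n i \<and> real (n i) * q i \<in> \<int>" for i
    unfolding n_def by (rule someI_ex) (rule rat_denom[OF q(1)[rule_format]])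
  define N where "N = (\<Prod>i\<in>UNIV. n i)"
  have N0: "0 < N" using n by (simp add: N_def)
  have Nq: "real N * q i \<in> \<int>" for i
  proof -
    have "N = n i * (\<Prod>j\<in>UNIV - {i}. n j)" unfolding N_def by (simp add: prod.remove)
    then have e: "real N * q i = (real (n i) * q i) * real (\<Prod>j\<in>UNIV - {i}. n j)" by simp
    show ?thesis unfolding e by (rule Ints_mult) (use n[of i] in auto)
  qed
  have "real N *\<^sub>R x = (\<Sum>i\<in>UNIV. (real N * q i) *\<^sub>R c i)" by (simp add: q(2) scaleR_sum_right)
  then have "real N *\<^sub>R x \<in> comb \<int> c" unfolding comb_def using Nq by (intro CollectI exI[of _ "\<lambda>i. real N * q i"]) simp
  then show ?thesis using N0 by blast
qed

lemma comb_denom_family: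
  fixes c :: "'n::finite \<Rightarrow> real^'m" and x :: "'k::finite \<Rightarrow> real^'m"
  assumes "\<And>i. x i \<in> comb \<rat> c" shows "\<exists>N::nat. 0 < N \<and> (\<forall>i. real N *\<^sub>R x i \<in> comb \<int> c)"
proof -
  define n where "n i = (SOME N::nat. 0 < N \<and> real N *\<^sub>R x i \<in> comb \<int> c)" for i
  have n: "0 < n i \<and> real (n i) *\<^sub>R x i \<in> comb \<int> c" for i
    unfolding n_def by (rule someI_ex) (rule comb_denom[OF assms])
  define N where "N = (\<Prod>i\<in>UNIV. n i)"
  have N0: "0 < N" using n by (simp add: N_def)
  have "real N *\<^sub>R x i \<in> comb \<int> c" for i
  proof -
    have "N = n i * (\<Prod>j\<in>UNIV - {i}. n j)" unfolding N_def by (simp add: prod.remove)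
    then have "real N *\<^sub>R x i = real (\<Prod>j\<in>UNIV - {i}. n j) *\<^sub>R (real (n i) *\<^sub>R x i)" by (simp add: mult.commute)
    then have e: "real N *\<^sub>R x i = real (\<Prod>j\<in>UNIV - {i}. n j) *\<^sub>R (real (n i) *\<^sub>R x i)" .
    show ?thesis unfolding e by (rule Ints_rs.comb_scale[OF Ints_of_nat]) (use n[of i] in simp)
  qed
  then show ?thesis using N0 by blast
qed

lemma finite_index_mult:
  fixes c :: "'n::finite \<Rightarrow> real^'m" and H :: "(real^'m) set"
  assumes Hs: "H \<subseteq> comb \<int> c" "0 \<in> H" "\<And>x y. x \<in> H \<Longrightarrow> y \<in> H \<Longrightarrow> x + y \<in> H" "\<And>x. x \<in> H \<Longrightarrow> -x \<in> H"
    and N: "0 < (N::nat)" "\<And>x. x \<in> comb \<int> c \<Longrightarrow> real N *\<^sub>R x \<in> H"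
  shows "finite_index H (comb \<int> c)"
proof -
  define K where "K = (Pi UNIV (\<lambda>_::'n. {..<N}))"
  have finK: "finite K" unfolding K_def using finite_PiE[of UNIV "\<lambda>_::'n. {..<N}"] by (simp add: PiE_UNIV_domain)
  define rep where "rep k = (\<Sum>i\<in>UNIV. real (k i) *\<^sub>R c i)" for k :: "'n \<Rightarrow> nat"
  have "(\<lambda>x. (\<lambda>h. x + h) ` H) ` comb \<int> c \<subseteq> (\<lambda>k. (\<lambda>h. rep k + h) ` H) ` K"
  proof clarify
    fix x assume "x \<in> comb \<int> c"
    then obtain z where z: "\<forall>i. z i \<in> \<int>" "x = (\<Sum>i\<in>UNIV. z i *\<^sub>R c i)" unfolding comb_def by blast
    define k where "k i = nat (\<lfloor>z i\<rfloor> mod int N)" for i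
    define w where "w i = \<lfloor>z i\<rfloor> div int N" for i
    have kK: "k \<in> K" using N(1) by (auto simp: K_def k_def nat_less_iff)
    have zi: "z i = real (k i) + real N * of_int (w i)" for i
    proof -
      have a1: "z i = of_int \<lfloor>z i\<rfloor>" using z(1) by (auto elim: Ints_cases)
      have a2: "\<lfloor>z i\<rfloor> = \<lfloor>z i\<rfloor> mod int N + int N * w i" unfolding w_def by simp
      have a3: "\<lfloor>z i\<rfloor> mod int N \<ge> 0" using N(1) by simp
      have a4: "real (nat (\<lfloor>z i\<rfloor> mod int N)) = of_int (\<lfloor>z i\<rfloor> mod int N)"
        using a3 by (simp add: of_nat_nat)
      have "z i = of_int (\<lfloor>z i\<rfloor> mod int N + int N * w i)" using a1 a2 by simp
      then have "z i = of_int (\<lfloor>z i\<rfloor> mod int N) + of_int (int N * w i)"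
        by (simp only: of_int_add)
      then show ?thesis unfolding k_def using a4 by simp
    qed
    have "x - rep k = real N *\<^sub>R (\<Sum>i\<in>UNIV. of_int (w i) *\<^sub>R c i)"
      unfolding z(2) rep_def using zi
      by (simp add: sum_subtractf[symmetric] scaleR_sum_right scaleR_diff_left[symmetric])
    moreover have "(\<Sum>i\<in>UNIV. of_int (w i) *\<^sub>R c i) \<in> comb \<int> c"
      unfolding comb_def by (intro CollectI exI[of _ "\<lambda>i. of_int (w i)"]) simp
    ultimately have h0: "x - rep k \<in> H" using N(2) by simp
    have "(\<lambda>h. x + h) ` H = (\<lambda>h. rep k + h) ` H"
    proof
      show "(\<lambda>h. x + h) ` H \<subseteq> (\<lambda>h. rep k + h) ` H"
      proof clarify
        fix h assume "h \<in> H"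
        then have "(x - rep k) + h \<in> H" using h0 Hs(3) by blast
        moreover have "x + h = rep k + ((x - rep k) + h)" by simp
        ultimately show "x + h \<in> (\<lambda>h. rep k + h) ` H" by blast
      qed
      show "(\<lambda>h. rep k + h) ` H \<subseteq> (\<lambda>h. x + h) ` H"
      proof clarify
        fix h assume "h \<in> H"
        then have "- (x - rep k) + h \<in> H" using h0 Hs(3,4) by blast
        moreover have "rep k + h = x + (- (x - rep k) + h)" by simp
        ultimately show "rep k + h \<in> (\<lambda>h. x + h) ` H" by blast
      qed
    qed
    then show "(\<lambda>h. x + h) ` H \<in> (\<lambda>k. (\<lambda>h. rep k + h) ` H) ` K" using kK by (rule rev_image_eqI[rotated])
  qed
  then show ?thesis unfolding finite_index_def using finite_surj[OF finK] by blast
qed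

lemma finite_index_multiple:
  fixes H X :: "(real^'m) set"
  assumes fi: "finite_index H X" and H: "0 \<in> H" "\<And>x. x \<in> H \<Longrightarrow> -x \<in> H" "\<And>x y. x \<in> H \<Longrightarrow> y \<in> H \<Longrightarrow> x + y \<in> H"
    and x: "\<And>k::nat. real k *\<^sub>R x \<in> X"
  shows "\<exists>m::nat. 0 < m \<and> real m *\<^sub>R x \<in> H"
proof -
  define f where "f k = (\<lambda>h. real k *\<^sub>R x + h) ` H" for k :: nat
  have "f ` UNIV \<subseteq> (\<lambda>x. (\<lambda>h. x + h) ` H) ` X" using x by (auto simp: f_def)
  then have "finite (f ` UNIV)" using fi unfolding finite_index_def using finite_subset by blast
  then have "\<not> inj f" using finite_imageD infinite_UNIV_nat by blast
  then obtain j k where jk: "f j = f k" "j \<noteq> k" unfolding inj_def by blast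
  have gen: "\<exists>m::nat. 0 < m \<and> real m *\<^sub>R x \<in> H" if "f j = f k" "j < k" for j k
  proof -
    have "real j *\<^sub>R x + 0 \<in> f j" using H(1) by (auto simp: f_def)
    then have "real j *\<^sub>R x \<in> f k" using that by simp
    then obtain h where h: "h \<in> H" "real j *\<^sub>R x = real k *\<^sub>R x + h" by (auto simp: f_def)
    have "real (k - j) *\<^sub>R x = - h" using h(2) that(2)
      by (simp add: of_nat_diff scaleR_diff_left algebra_simps)
    then show ?thesis using H(2)[OF h(1)] that(2) by (intro exI[of _ "k - j"]) auto
  qed
  show ?thesis
  proof (cases "j < k")
    case True then show ?thesis using gen jk by blast
  next
    case False then have "k < j" using jk by simp
    then show ?thesis using gen[of k j] jk by simp
  qed
qed


lemma Ints_sub_Rats': "x \<in> (\<int>::real set) \<Longrightarrow> x \<in> \<rat>"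
  by (auto elim: Ints_cases)

lemma comb_Ints_Rats: "comb \<int> c \<subseteq> comb \<rat> c"
  by (rule comb_mono) (auto intro: Ints_sub_Rats')

lemma fi_imp_rat_sub:
  fixes c c' :: "'n::finite \<Rightarrow> real^'m"
  assumes fi: "finite_index (comb \<int> c \<inter> comb \<int> c') (comb \<int> c)"
  shows "comb \<rat> c \<subseteq> comb \<rat> c'"
proof (rule Rats_rs.comb_subspace)
  show "0 \<in> comb \<rat> c'" by (rule Rats_rs.comb_zero)
  show "x + y \<in> comb \<rat> c'" if "x \<in> comb \<rat> c'" "y \<in> comb \<rat> c'" for x y
    using that by (rule Rats_rs.comb_add)
  show "a *\<^sub>R x \<in> comb \<rat> c'" if "a \<in> \<rat>" "x \<in> comb \<rat> c'" for a x
    using that by (rule Rats_rs.comb_scale)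
  fix i
  have "\<exists>m::nat. 0 < m \<and> real m *\<^sub>R c i \<in> comb \<int> c \<inter> comb \<int> c'"
  proof (rule finite_index_multiple[OF fi])
    show "0 \<in> comb \<int> c \<inter> comb \<int> c'" using Ints_rs.comb_zero by blast
    show "- x \<in> comb \<int> c \<inter> comb \<int> c'" if "x \<in> comb \<int> c \<inter> comb \<int> c'" for x
      using that Ints_rs.comb_neg by blast
    show "x + y \<in> comb \<int> c \<inter> comb \<int> c'" if "x \<in> comb \<int> c \<inter> comb \<int> c'" "y \<in> comb \<int> c \<inter> comb \<int> c'" for x y
      using that Ints_rs.comb_add by blast
    show "real k *\<^sub>R c i \<in> comb \<int> c" for k :: nat
      using Ints_rs.comb_scale[OF Ints_of_nat Ints_rs.comb_base] by blast
  qed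
  then obtain m :: nat where m: "0 < m" "real m *\<^sub>R c i \<in> comb \<int> c'" by blast
  then have "real m *\<^sub>R c i \<in> comb \<rat> c'" using comb_Ints_Rats by blast
  then have "inverse (real m) *\<^sub>R (real m *\<^sub>R c i) \<in> comb \<rat> c'"
    by (rule Rats_rs.comb_scale[OF Rats_inverse[OF Rats_of_nat]])
  then show "c i \<in> comb \<rat> c'" using m(1) by simp
qed

lemma rat_eq_imp_fi:
  fixes c c' :: "'n::finite \<Rightarrow> real^'m"
  assumes eq: "comb \<rat> c = comb \<rat> c'"
  shows "finite_index (comb \<int> c \<inter> comb \<int> c') (comb \<int> c')"
proof -
  have "c' i \<in> comb \<rat> c" for i using eq Rats_rs.comb_base by blast
  then obtain N :: nat where N: "0 < N" "\<And>i. real N *\<^sub>R c' i \<in> comb \<int> c"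
    using comb_denom_family by blast
  have sub: "comb \<int> c' \<subseteq> {y. real N *\<^sub>R y \<in> comb \<int> c}"
  proof (rule Ints_rs.comb_subspace)
    show "0 \<in> {y. real N *\<^sub>R y \<in> comb \<int> c}" using Ints_rs.comb_zero by simp
    show "x + y \<in> {y. real N *\<^sub>R y \<in> comb \<int> c}" if "x \<in> {y. real N *\<^sub>R y \<in> comb \<int> c}" "y \<in> {y. real N *\<^sub>R y \<in> comb \<int> c}" for x y
      using that Ints_rs.comb_add by (simp add: scaleR_add_right)
    show "a *\<^sub>R x \<in> {y. real N *\<^sub>R y \<in> comb \<int> c}" if "a \<in> \<int>" "x \<in> {y. real N *\<^sub>R y \<in> comb \<int> c}" for a x
      using that Ints_rs.comb_scale[of a "real N *\<^sub>R x" c] by (simp add: mult.commute)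
    show "c' i \<in> {y. real N *\<^sub>R y \<in> comb \<int> c}" for i using N(2) by simp
  qed
  show ?thesis
  proof (rule finite_index_mult[OF _ _ _ _ N(1)])
    show "comb \<int> c \<inter> comb \<int> c' \<subseteq> comb \<int> c'" by blast
    show "0 \<in> comb \<int> c \<inter> comb \<int> c'" using Ints_rs.comb_zero by blast
    show "- x \<in> comb \<int> c \<inter> comb \<int> c'" if "x \<in> comb \<int> c \<inter> comb \<int> c'" for x
      using that Ints_rs.comb_neg by blast
    show "x + y \<in> comb \<int> c \<inter> comb \<int> c'" if "x \<in> comb \<int> c \<inter> comb \<int> c'" "y \<in> comb \<int> c \<inter> comb \<int> c'" for x y
      using that Ints_rs.comb_add by blast
    show "real N *\<^sub>R x \<in> comb \<int> c \<inter> comb \<int> c'" if "x \<in> comb \<int> c'" for x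
      using that sub Ints_rs.comb_scale[OF Ints_of_nat] by blast
  qed
qed

lemma commensurate_comb_iff:
  fixes c c' :: "'n::finite \<Rightarrow> real^'m"
  shows "commensurate (comb \<int> c) (comb \<int> c') \<longleftrightarrow> comb \<rat> c = comb \<rat> c'"
proof
  assume "commensurate (comb \<int> c) (comb \<int> c')"
  then have f1: "finite_index (comb \<int> c \<inter> comb \<int> c') (comb \<int> c)"
    and f2: "finite_index (comb \<int> c' \<inter> comb \<int> c) (comb \<int> c')"
    unfolding commensurate_def by (auto simp: Int_commute)
  show "comb \<rat> c = comb \<rat> c'" using fi_imp_rat_sub[OF f1] fi_imp_rat_sub[OF f2] by blast
next
  assume eq: "comb \<rat> c = comb \<rat> c'"
  show "commensurate (comb \<int> c) (comb \<int> c')"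
    unfolding commensurate_def using rat_eq_imp_fi[OF eq] rat_eq_imp_fi[OF eq[symmetric]]
    by (simp add: Int_commute)
qed


lemma SO_closed:
  fixes R S :: "real^'n^'n"
  shows "R \<in> SO_set \<Longrightarrow> S \<in> SO_set \<Longrightarrow> R ** S \<in> SO_set"
    and "R \<in> SO_set \<Longrightarrow> transpose R \<in> SO_set"
    and "mat 1 \<in> (SO_set :: (real^'n^'n) set)"
    and "R \<in> SO_set \<Longrightarrow> transpose R ** R = mat 1"
    and "R \<in> SO_set \<Longrightarrow> R ** transpose R = mat 1"
proof -
  show "R \<in> SO_set \<Longrightarrow> S \<in> SO_set \<Longrightarrow> R ** S \<in> SO_set"
    unfolding SO_set_def using orthogonal_matrix_mul[of R S] by (simp add: det_mul)
  show "R \<in> SO_set \<Longrightarrow> transpose R \<in> SO_set" unfolding SO_set_def by simp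
  show "mat 1 \<in> (SO_set :: (real^'n^'n) set)" unfolding SO_set_def by (simp add: orthogonal_matrix_id)
  show "R \<in> SO_set \<Longrightarrow> transpose R ** R = mat 1" unfolding SO_set_def orthogonal_matrix_def by simp
  show "R \<in> SO_set \<Longrightarrow> R ** transpose R = mat 1" unfolding SO_set_def orthogonal_matrix_def by simp
qed

lemma SO_subgroup_group:
  fixes S :: "(real^'n^'n) set"
  assumes sub: "S \<subseteq> SO_set" and one: "mat 1 \<in> S"
    and mul: "\<And>R T. R \<in> S \<Longrightarrow> T \<in> S \<Longrightarrow> R ** T \<in> S"
    and tr: "\<And>R. R \<in> S \<Longrightarrow> transpose R \<in> S"
  shows "group (SO_subgroup S)" and "\<And>R. R \<in> S \<Longrightarrow> inv\<^bsub>SO_subgroup S\<^esub> R = transpose R"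
proof -
  show grp: "group (SO_subgroup S)"
  proof (rule groupI)
    show "\<And>x y. x \<in> carrier (SO_subgroup S) \<Longrightarrow> y \<in> carrier (SO_subgroup S) \<Longrightarrow>
       x \<otimes>\<^bsub>SO_subgroup S\<^esub> y \<in> carrier (SO_subgroup S)" using mul by (simp add: SO_subgroup_def)
    show "\<one>\<^bsub>SO_subgroup S\<^esub> \<in> carrier (SO_subgroup S)" using one by (simp add: SO_subgroup_def)
    show "\<And>x y z. x \<otimes>\<^bsub>SO_subgroup S\<^esub> y \<otimes>\<^bsub>SO_subgroup S\<^esub> z = x \<otimes>\<^bsub>SO_subgroup S\<^esub> (y \<otimes>\<^bsub>SO_subgroup S\<^esub> z)"
      by (simp add: SO_subgroup_def matrix_mul_assoc)
    show "\<And>x. \<one>\<^bsub>SO_subgroup S\<^esub> \<otimes>\<^bsub>SO_subgroup S\<^esub> x = x" by (simp add: SO_subgroup_def)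
    show "\<exists>y\<in>carrier (SO_subgroup S). y \<otimes>\<^bsub>SO_subgroup S\<^esub> x = \<one>\<^bsub>SO_subgroup S\<^esub>"
      if "x \<in> carrier (SO_subgroup S)" for x
      using that tr sub SO_closed(4)[of x] by (auto simp: SO_subgroup_def)
  qed
  show "inv\<^bsub>SO_subgroup S\<^esub> R = transpose R" if R: "R \<in> S" for R
  proof -
    have "transpose R \<otimes>\<^bsub>SO_subgroup S\<^esub> R = \<one>\<^bsub>SO_subgroup S\<^esub>"
      using R sub SO_closed(4)[of R] by (auto simp: SO_subgroup_def)
    then show ?thesis using group.inv_equality[OF grp] R tr by (simp add: SO_subgroup_def)
  qed
qed

lemma SO_subgroup_pow:
  "R [^]\<^bsub>SO_subgroup S\<^esub> (Suc n) = (R [^]\<^bsub>SO_subgroup S\<^esub> n) ** R"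
  "R [^]\<^bsub>SO_subgroup S\<^esub> (0::nat) = mat 1"
  by (simp_all add: SO_subgroup_def)


definition pres :: "('n::finite \<Rightarrow> real^'n) \<Rightarrow> real^'n^'n \<Rightarrow> bool" where
  "pres b M \<longleftrightarrow> (\<lambda>x. M *v x) ` comb \<rat> b = comb \<rat> b"

lemma SOC_comb:
  fixes b :: "'n::finite \<Rightarrow> real^'n"
  shows "SOC (comb \<int> b) = {R \<in> SO_set. pres b R}"
proof -
  have "commensurate (comb \<int> b) ((\<lambda>x. R *v x) ` comb \<int> b) \<longleftrightarrow> pres b R" for R :: "real^'n^'n"
    unfolding pres_def Ints_rs.comb_image Rats_rs.comb_image commensurate_comb_iff by auto
  then show ?thesis unfolding SOC_def by auto
qed

lemma SOS_comb:
  fixes b :: "'n::finite \<Rightarrow> real^'n"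
  shows "SOS (comb \<int> b) = {R \<in> SO_set. \<exists>\<alpha>::real. \<alpha> > 0 \<and> pres b (\<alpha> *\<^sub>R R)}"
proof -
  have e: "(\<lambda>x. \<alpha> *\<^sub>R (R *v x)) = (\<lambda>x. (\<alpha> *\<^sub>R R) *v x)" for \<alpha> and R :: "real^'n^'n"
    by (simp add: scaleR_matrix_vector_assoc)
  have "commensurate (comb \<int> b) ((\<lambda>x. \<alpha> *\<^sub>R (R *v x)) ` comb \<int> b) \<longleftrightarrow> pres b (\<alpha> *\<^sub>R R)" for \<alpha> and R :: "real^'n^'n"
    unfolding e pres_def Ints_rs.comb_image Rats_rs.comb_image commensurate_comb_iff by auto
  then show ?thesis unfolding SOS_def by auto
qed

lemma pres_one: "pres b (mat 1)"
  by (simp add: pres_def)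

lemma pres_mult: "pres b A \<Longrightarrow> pres b B \<Longrightarrow> pres b (A ** B)"
proof -
  assume A: "pres b A" and B: "pres b B"
  have "(\<lambda>x. (A ** B) *v x) ` comb \<rat> b = (\<lambda>x. A *v x) ` ((\<lambda>x. B *v x) ` comb \<rat> b)"
    by (simp add: image_image matrix_vector_mul_assoc)
  then show ?thesis using A B by (simp add: pres_def)
qed

lemma pres_inv: "pres b A \<Longrightarrow> A' ** A = mat 1 \<Longrightarrow> pres b A'"
proof -
  assume A: "pres b A" and inv: "A' ** A = mat 1"
  have "(\<lambda>x. A' *v x) ` comb \<rat> b = (\<lambda>x. A' *v x) ` ((\<lambda>x. A *v x) ` comb \<rat> b)"
    using A by (simp add: pres_def)
  also have "\<dots> = comb \<rat> b" by (simp add: image_image matrix_vector_mul_assoc inv)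
  finally show ?thesis by (simp add: pres_def)
qed

lemma pres_scale:
  assumes A: "pres b A" and q: "q \<in> \<rat>" "q \<noteq> 0"
  shows "pres b (q *\<^sub>R A)"
proof -
  have "(\<lambda>x. (q *\<^sub>R A) *v x) ` comb \<rat> b = (\<lambda>x. q *\<^sub>R x) ` ((\<lambda>x. A *v x) ` comb \<rat> b)"
    by (simp add: image_image scaleR_matrix_vector_assoc)
  also have "\<dots> = (\<lambda>x. q *\<^sub>R x) ` comb \<rat> b" using A by (simp add: pres_def)
  also have "\<dots> = comb \<rat> b"
  proof
    show "(\<lambda>x. q *\<^sub>R x) ` comb \<rat> b \<subseteq> comb \<rat> b" using Rats_rs.comb_scale[OF q(1)] by blast
    show "comb \<rat> b \<subseteq> (\<lambda>x. q *\<^sub>R x) ` comb \<rat> b"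
    proof
      fix x assume "x \<in> comb \<rat> b"
      then have "inverse q *\<^sub>R x \<in> comb \<rat> b" by (rule Rats_rs.comb_scale[OF Rats_inverse[OF q(1)]])
      moreover have "x = q *\<^sub>R (inverse q *\<^sub>R x)" using q(2) by simp
      ultimately show "x \<in> (\<lambda>x. q *\<^sub>R x) ` comb \<rat> b" by blast
    qed
  qed
  finally show ?thesis by (simp add: pres_def)
qed


lemma indep_coeffs:
  fixes b :: "'n::finite \<Rightarrow> real^'n"
  assumes inj: "inj b" and ind: "independent (range b)"
    and z: "(\<Sum>i\<in>UNIV. x i *\<^sub>R b i) = 0"
  shows "x i = 0"
proof -
  define c where "c v = x (inv_into UNIV b v)" for v
  have "(\<Sum>v\<in>range b. c v *\<^sub>R v) = (\<Sum>i\<in>UNIV. c (b i) *\<^sub>R b i)"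
    using inj by (simp add: sum.reindex)
  also have "\<dots> = 0" using z inj by (simp add: c_def)
  finally have "\<forall>v\<in>range b. c v = 0"
    using ind unfolding independent_explicit by blast
  then show ?thesis using inj by (auto simp: c_def)
qed

lemma det_rows_nz:
  fixes b :: "'n::finite \<Rightarrow> real^'n"
  assumes inj: "inj b" and ind: "independent (range b)"
  shows "det (\<chi> i. b i) \<noteq> 0"
proof -
  have "transpose (\<chi> i. b i) *v v = (\<Sum>i\<in>UNIV. (v$i) *\<^sub>R b i)" for v :: "real^'n"
    by (simp add: matrix_mult_sum row_def scalar_mult_eq_scaleR)
  then have "\<forall>v. transpose (\<chi> i. b i) *v v = 0 \<longrightarrow> v = 0"
    using indep_coeffs[OF inj ind] by (auto simp: vec_eq_iff)
  then obtain B :: "real^'n^'n" where "B ** transpose (\<chi> i. b i) = mat 1"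
    using matrix_left_invertible_ker by blast
  then have "invertible (transpose (\<chi> i. b i))" using invertible_left_inverse by blast
  then have "det (transpose (\<chi> i. b i)) \<noteq> 0" using invertible_det_nz by blast
  then show ?thesis by simp
qed

lemma pres_rep:
  fixes b :: "'n::finite \<Rightarrow> real^'n"
  assumes "pres b M"
  shows "\<exists>A::real^'n^'n. (\<forall>i j. A$i$j \<in> \<rat>) \<and> (\<chi> i. b i) ** transpose M = A ** (\<chi> i. b i)"
proof -
  have "M *v b j \<in> comb \<rat> b" for j
    using assms Rats_rs.comb_base[of b j] unfolding pres_def by blast
  then have "\<exists>a. (\<forall>i. a i \<in> \<rat>) \<and> M *v b j = (\<Sum>i\<in>UNIV. a i *\<^sub>R b i)" for j
    unfolding comb_def by blast
  then obtain a where a: "\<And>j. \<forall>i. a j i \<in> \<rat>" "\<And>j. M *v b j = (\<Sum>i\<in>UNIV. a j i *\<^sub>R b i)"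
    by metis
  define A :: "real^'n^'n" where "A = (\<chi> j i. a j i)"
  have "(\<chi> i. b i) ** transpose M = A ** (\<chi> i. b i)"
  proof -
    have "((\<chi> i. b i) ** transpose M) $ j $ l = (A ** (\<chi> i. b i)) $ j $ l" for j l
    proof -
      have "((\<chi> i. b i) ** transpose M) $ j $ l = (M *v b j) $ l"
        by (simp add: matrix_matrix_mult_def matrix_vector_mult_def transpose_def mult.commute)
      also have "\<dots> = (\<Sum>i\<in>UNIV. a j i * b i $ l)" using a(2)[of j] by simp
      also have "\<dots> = (A ** (\<chi> i. b i)) $ j $ l" by (simp add: matrix_matrix_mult_def A_def)
      finally show ?thesis .
    qed
    then show ?thesis by (simp add: vec_eq_iff)
  qed
  moreover have "\<forall>i j. A$i$j \<in> \<rat>" using a(1) by (simp add: A_def)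
  ultimately show ?thesis by blast
qed

lemma det_rat: "(\<forall>i j. A$i$j \<in> \<rat>) \<Longrightarrow> det (A::real^'n^'n) \<in> \<rat>"
  unfolding det_def by (intro Rats_sum Rats_mult Rats_prod) auto

lemma pres_det_rat:
  fixes b :: "'n::finite \<Rightarrow> real^'n"
  assumes inj: "inj b" and ind: "independent (range b)" and p: "pres b M"
  shows "det M \<in> \<rat>"
proof -
  obtain A where A: "\<forall>i j. A$i$j \<in> \<rat>" "(\<chi> i. b i) ** transpose M = A ** (\<chi> i. b i)"
    using pres_rep[OF p] by blast
  have "det (\<chi> i. b i) * det M = det A * det (\<chi> i. b i)"
    using arg_cong[OF A(2), of det] by (simp add: det_mul)
  then have "det M = det A" using det_rows_nz[OF inj ind] by simp
  then show ?thesis using det_rat[OF A(1)] by simp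
qed

lemma det_scaleR:
  fixes A :: "real^'n::finite^'n"
  shows "det (c *\<^sub>R A) = c ^ CARD('n) * det A"
proof -
  have "c *\<^sub>R A = (\<chi> i. c *s (A$i))" by (simp add: vec_eq_iff scalar_mult_eq_scaleR)
  then have "det (c *\<^sub>R A) = (\<Prod>i\<in>(UNIV::'n set). c) * det (\<chi> i. A$i)" by (simp add: det_rows_mul)
  then show ?thesis by simp
qed

lemma alpha_pow_rat:
  fixes b :: "'n::finite \<Rightarrow> real^'n"
  assumes inj: "inj b" and ind: "independent (range b)" and p: "pres b (\<alpha> *\<^sub>R R)" and R: "R \<in> SO_set"
  shows "\<alpha> ^ CARD('n) \<in> \<rat>"
  using pres_det_rat[OF inj ind p] R by (simp add: det_scaleR SO_set_def)


lemma scaleR_mm: "(x *\<^sub>R A) ** (y *\<^sub>R B) = (x * y) *\<^sub>R (A ** (B::real^'n^'n))"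
  by (simp add: matrix_scalar_ac scalar_matrix_assoc[symmetric])

lemma rat_mats_countable: "countable {A :: real^'n::finite^'n. \<forall>i j. A$i$j \<in> \<rat>}"
proof -
  have "{A :: real^'n^'n. \<forall>i j. A$i$j \<in> \<rat>} \<subseteq> range (\<lambda>f :: 'n \<Rightarrow> 'n \<Rightarrow> rat. \<chi> i j. of_rat (f i j))"
  proof
    fix A :: "real^'n^'n" assume "A \<in> {A. \<forall>i j. A$i$j \<in> \<rat>}"
    then have "\<forall>i j. \<exists>r. A$i$j = of_rat r" by (auto simp: Rats_def)
    then obtain f where f: "\<And>i j. A$i$j = of_rat (f i j)" by (metis (no_types))
    then have "A = (\<chi> i j. of_rat (f i j))" by (simp add: vec_eq_iff)
    then show "A \<in> range (\<lambda>f :: 'n \<Rightarrow> 'n \<Rightarrow> rat. \<chi> i j. of_rat (f i j))" by blast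
  qed
  moreover have "countable (range (\<lambda>f :: 'n \<Rightarrow> 'n \<Rightarrow> rat. \<chi> i j. of_rat (f i j)))"
    by (rule countable_image) simp
  ultimately show ?thesis using countable_subset by blast
qed

lemma SOS_countable:
  fixes b :: "'n::finite \<Rightarrow> real^'n"
  assumes inj: "inj b" and ind: "independent (range b)"
  shows "countable {R \<in> SO_set. \<exists>\<alpha>::real. \<alpha> > 0 \<and> pres b (\<alpha> *\<^sub>R R)}"
proof -
  define S where "S = {R \<in> SO_set. \<exists>\<alpha>::real. \<alpha> > 0 \<and> pres b (\<alpha> *\<^sub>R R)}"
  define B :: "real^'n^'n" where "B = (\<chi> i. b i)"
  define al where "al R = (SOME \<alpha>::real. \<alpha> > 0 \<and> pres b (\<alpha> *\<^sub>R R))" for R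
  define phi where "phi R = (SOME A::real^'n^'n. (\<forall>i j. A$i$j \<in> \<rat>) \<and> B ** transpose (al R *\<^sub>R R) = A ** B)" for R
  have al: "al R > 0 \<and> pres b (al R *\<^sub>R R)" if RS: "R \<in> S" for R
  proof -
    obtain \<alpha> where "\<alpha> > 0 \<and> pres b (\<alpha> *\<^sub>R R)" using RS unfolding S_def by blast
    then show ?thesis unfolding al_def by (rule someI)
  qed
  have phi: "(\<forall>i j. phi R $i$j \<in> \<rat>) \<and> B ** transpose (al R *\<^sub>R R) = phi R ** B" if RS: "R \<in> S" for R
  proof -
    obtain A where "(\<forall>i j. A$i$j \<in> \<rat>) \<and> B ** transpose (al R *\<^sub>R R) = A ** B"
      using pres_rep[of b "al R *\<^sub>R R"] al[OF RS] unfolding B_def by blast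
    then show ?thesis unfolding phi_def by (rule someI)
  qed
  have "invertible B" unfolding B_def invertible_det_nz by (rule det_rows_nz[OF inj ind])
  then obtain B' where B': "B' ** B = mat 1" using invertible_left_inverse by blast
  have "inj_on phi S"
  proof (rule inj_onI)
    fix R T assume R: "R \<in> S" and T: "T \<in> S" and eq: "phi R = phi T"
    have "B ** transpose (al R *\<^sub>R R) = B ** transpose (al T *\<^sub>R T)" using phi[OF R] phi[OF T] eq by simp
    then have "B' ** (B ** transpose (al R *\<^sub>R R)) = B' ** (B ** transpose (al T *\<^sub>R T))" by simp
    then have "transpose (al R *\<^sub>R R) = transpose (al T *\<^sub>R T)" by (simp add: matrix_mul_assoc B')
    then have e: "al R *\<^sub>R R = al T *\<^sub>R T" using transpose_transpose by metis
    have dR: "det R = 1" "det T = 1" using R T by (auto simp: S_def SO_set_def)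
    have "al R ^ CARD('n) = al T ^ CARD('n)" using arg_cong[OF e, of det] dR by (simp add: det_scaleR)
    then have "al R = al T" using al[OF R] al[OF T] by (simp add: power_eq_iff_eq_base)
    then show "R = T" using e al[OF R] by simp
  qed
  moreover have "phi ` S \<subseteq> {A. \<forall>i j. A$i$j \<in> \<rat>}" using phi by auto
  then have "countable (phi ` S)" using rat_mats_countable countable_subset by blast
  ultimately show ?thesis unfolding S_def[symmetric] using countable_image_inj_on by blast
qed



theorem mainTheorem3:
  fixes L :: "(real^'n) set"
  assumes "CARD('n) \<ge> 2"
    and "is_lattice L"
  shows "SOC L \<lhd> SO_subgroup (SOS L)
       \<and> countable (carrier (SO_subgroup (SOS L) Mod SOC L))
       \<and> (\<exists>(I :: nat set) (n :: nat \<Rightarrow> nat).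
            (\<forall>i\<in>I. (\<exists>p k. prime p \<and> k \<ge> 1 \<and> n i = p ^ k) \<and> n i dvd CARD('n))
          \<and> SO_subgroup (SOS L) Mod SOC L \<cong> sum_group I (\<lambda>i. integer_mod_group (n i)))"
proof -
  obtain b :: "'n \<Rightarrow> real^'n" where b: "inj b" "independent (range b)"
    "L = range (\<lambda>k :: 'n \<Rightarrow> int. \<Sum>i\<in>UNIV. of_int (k i) *\<^sub>R b i)"
    using assms(2) unfolding is_lattice_def by blast
  have L: "L = comb \<int> b" using b(3) lattice_comb by simp
  define S where "S = SOS L"
  define N where "N = SOC L"
  have S': "S = {R \<in> SO_set. \<exists>\<alpha>::real. \<alpha> > 0 \<and> pres b (\<alpha> *\<^sub>R R)}" unfolding S_def L by (rule SOS_comb)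
  have N': "N = {R \<in> SO_set. pres b R}" unfolding N_def L by (rule SOC_comb)
  have SSO: "S \<subseteq> SO_set" using S' by blast
  have S1: "mat 1 \<in> S" using S' pres_one SO_closed(3) by (auto intro!: exI[of _ 1])
  have Smul: "R ** T \<in> S" if R: "R \<in> S" and T: "T \<in> S" for R T
  proof -
    obtain \<alpha> where a: "\<alpha> > 0" "pres b (\<alpha> *\<^sub>R R)" using R S' by blast
    obtain \<beta> where be: "\<beta> > 0" "pres b (\<beta> *\<^sub>R T)" using T S' by blast
    have "pres b ((\<alpha> * \<beta>) *\<^sub>R (R ** T))" using pres_mult[OF a(2) be(2)] by (simp add: scaleR_mm)
    moreover have "R ** T \<in> SO_set" using R T SSO SO_closed(1) by blast
    ultimately show ?thesis using S' a(1) be(1) by (auto intro!: exI[of _ "\<alpha> * \<beta>"])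
  qed
  have pres_tr: "pres b ((1/\<alpha>) *\<^sub>R transpose R)" if "\<alpha> > 0" "pres b (\<alpha> *\<^sub>R R)" "R \<in> SO_set" for \<alpha> R
  proof (rule pres_inv[OF that(2)])
    show "(1 / \<alpha>) *\<^sub>R transpose R ** \<alpha> *\<^sub>R R = mat 1"
      using that SO_closed(4)[of R] by (simp add: scaleR_mm)
  qed
  have Str: "transpose R \<in> S" if R: "R \<in> S" for R
  proof -
    obtain \<alpha> where a: "\<alpha> > 0" "pres b (\<alpha> *\<^sub>R R)" using R S' by blast
    have "transpose R \<in> SO_set" using R SSO SO_closed(2) by blast
    then show ?thesis using S' a pres_tr[OF a] R SSO by (auto intro!: exI[of _ "1/\<alpha>"])
  qed
  have grp: "group (SO_subgroup S)" and invS: "\<And>R. R \<in> S \<Longrightarrow> inv\<^bsub>SO_subgroup S\<^esub> R = transpose R"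
    using SO_subgroup_group[OF SSO S1 Smul Str] by auto
  have carrS: "carrier (SO_subgroup S) = S" and multS: "\<And>x y. x \<otimes>\<^bsub>SO_subgroup S\<^esub> y = x ** y"
    by (simp_all add: SO_subgroup_def)
  have NS: "N \<subseteq> S" using N' S' by (auto intro!: exI[of _ 1])
  have Ntr: "transpose R \<in> N" if R: "R \<in> N" for R
  proof -
    have "pres b (transpose R)" using R N' SO_closed(4)[of R] pres_inv by blast
    then show ?thesis using R N' SO_closed(2) by blast
  qed
  have Nmul: "R ** T \<in> N" if "R \<in> N" "T \<in> N" for R T
    using that N' pres_mult SO_closed(1) by blast
  have subN: "subgroup N (SO_subgroup S)"
  proof (rule group.subgroupI[OF grp])
    show "N \<subseteq> carrier (SO_subgroup S)" using NS carrS by simp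
    show "N \<noteq> {}" using N' pres_one SO_closed(3) by auto
    show "inv\<^bsub>SO_subgroup S\<^esub> a \<in> N" if "a \<in> N" for a using that invS NS Ntr by auto
    show "a \<otimes>\<^bsub>SO_subgroup S\<^esub> b \<in> N" if "a \<in> N" "b \<in> N" for a b using that Nmul multS by simp
  qed
  have conj: "pres b (A ** M ** B')" if "pres b (\<alpha> *\<^sub>R A)" "\<alpha> > 0" "pres b M" "pres b ((1/\<alpha>) *\<^sub>R B')" for A M B' \<alpha>
  proof -
    have "pres b ((\<alpha> *\<^sub>R A) ** M ** ((1/\<alpha>) *\<^sub>R B'))" using that pres_mult by blast
    moreover have "(\<alpha> *\<^sub>R A) ** M ** ((1/\<alpha>) *\<^sub>R B') = A ** M ** B'"
      using that(2) by (simp add: matrix_scalar_ac scalar_matrix_assoc[symmetric])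
    ultimately show ?thesis by simp
  qed
  have normN: "N \<lhd> SO_subgroup S"
  proof (rule group.normal_invI[OF grp subN])
    fix x h assume x: "x \<in> carrier (SO_subgroup S)" and h: "h \<in> N"
    obtain \<alpha> where a: "\<alpha> > 0" "pres b (\<alpha> *\<^sub>R x)" using x carrS S' by blast
    have xSO: "x \<in> SO_set" using x carrS SSO by blast
    have hSO: "h \<in> SO_set" and ph: "pres b h" using h N' by auto
    have "pres b (x ** h ** transpose x)" using conj[OF a(2) a(1) ph pres_tr[OF a xSO]] .
    moreover have "x ** h ** transpose x \<in> SO_set" using xSO hSO SO_closed(1,2) by blast
    ultimately have "x ** h ** transpose x \<in> N" using N' by blast
    then show "x \<otimes>\<^bsub>SO_subgroup S\<^esub> h \<otimes>\<^bsub>SO_subgroup S\<^esub> inv\<^bsub>SO_subgroup S\<^esub> x \<in> N"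
      using invS x carrS multS by simp
  qed
  have commN: "a \<otimes>\<^bsub>SO_subgroup S\<^esub> c \<otimes>\<^bsub>SO_subgroup S\<^esub> inv\<^bsub>SO_subgroup S\<^esub> a \<otimes>\<^bsub>SO_subgroup S\<^esub> inv\<^bsub>SO_subgroup S\<^esub> c \<in> N"
    if a: "a \<in> carrier (SO_subgroup S)" and c: "c \<in> carrier (SO_subgroup S)" for a c
  proof -
    obtain \<alpha> where al: "\<alpha> > 0" "pres b (\<alpha> *\<^sub>R a)" using a carrS S' by blast
    obtain \<beta> where be: "\<beta> > 0" "pres b (\<beta> *\<^sub>R c)" using c carrS S' by blast
    have aSO: "a \<in> SO_set" and cSO: "c \<in> SO_set" using a c carrS SSO by auto
    have p1: "pres b ((\<alpha> *\<^sub>R a) ** (\<beta> *\<^sub>R c) ** ((1/\<alpha>) *\<^sub>R transpose a) ** ((1/\<beta>) *\<^sub>R transpose c))"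
      using al be pres_tr[OF al aSO] pres_tr[OF be cSO] pres_mult by blast
    have "(\<alpha> *\<^sub>R a) ** (\<beta> *\<^sub>R c) ** ((1/\<alpha>) *\<^sub>R transpose a) ** ((1/\<beta>) *\<^sub>R transpose c)
          = (\<alpha> * \<beta> * (1/\<alpha>) * (1/\<beta>)) *\<^sub>R (a ** c ** transpose a ** transpose c)"
      by (simp add: scaleR_mm)
    also have "\<alpha> * \<beta> * (1/\<alpha>) * (1/\<beta>) = 1" using al(1) be(1) by simp
    finally have "pres b (a ** c ** transpose a ** transpose c)" using p1 by simp
    moreover have "a ** c ** transpose a ** transpose c \<in> SO_set" using aSO cSO SO_closed(1,2) by blast
    ultimately have "a ** c ** transpose a ** transpose c \<in> N" using N' by blast
    then show ?thesis using invS a c carrS multS by simp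
  qed
  have d0: "0 < CARD('n)" by simp
  have expN: "a [^]\<^bsub>SO_subgroup S\<^esub> CARD('n) \<in> N" if a: "a \<in> carrier (SO_subgroup S)" for a
  proof -
    obtain \<alpha> where al: "\<alpha> > 0" "pres b (\<alpha> *\<^sub>R a)" using a carrS S' by blast
    have aSO: "a \<in> SO_set" using a carrS SSO by auto
    have pw: "pres b ((\<alpha> ^ k) *\<^sub>R (a [^]\<^bsub>SO_subgroup S\<^esub> k))" for k :: nat
    proof (induction k)
      case 0 then show ?case by (simp add: SO_subgroup_def pres_one)
    next
      case (Suc k)
      have "(\<alpha> ^ Suc k) *\<^sub>R (a [^]\<^bsub>SO_subgroup S\<^esub> Suc k) = ((\<alpha> ^ k) *\<^sub>R (a [^]\<^bsub>SO_subgroup S\<^esub> k)) ** (\<alpha> *\<^sub>R a)"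
        by (simp add: SO_subgroup_def scaleR_mm mult.commute)
      then show ?case using pres_mult[OF Suc al(2)] by simp
    qed
    have q: "\<alpha> ^ CARD('n) \<in> \<rat>" by (rule alpha_pow_rat[OF b(1) b(2) al(2) aSO])
    have "pres b ((1 / \<alpha> ^ CARD('n)) *\<^sub>R ((\<alpha> ^ CARD('n)) *\<^sub>R (a [^]\<^bsub>SO_subgroup S\<^esub> CARD('n))))"
    proof (rule pres_scale[OF pw[of "CARD('n)"]])
      show "1 / \<alpha> ^ CARD('n) \<in> \<rat>" using q by simp
      show "1 / \<alpha> ^ CARD('n) \<noteq> 0" using al(1) by simp
    qed
    then have "pres b (a [^]\<^bsub>SO_subgroup S\<^esub> CARD('n))" using al(1) by simp
    moreover have "a [^]\<^bsub>SO_subgroup S\<^esub> CARD('n) \<in> S"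
      using a carrS monoid.nat_pow_closed[OF group.is_monoid[OF grp]] by blast
    ultimately show ?thesis using N' SSO by blast
  qed
  have Q: "comm_group (SO_subgroup S Mod N) \<and> (\<forall>X\<in>carrier (SO_subgroup S Mod N). X [^]\<^bsub>SO_subgroup S Mod N\<^esub> CARD('n) = \<one>\<^bsub>SO_subgroup S Mod N\<^esub>)"
    using group.quot_comm_exp[OF grp normN commN expN] by blast
  have cS: "countable S" using SOS_countable[OF b(1) b(2)] S' by simp
  have cQ: "countable (carrier (SO_subgroup S Mod N))"
    unfolding carrier_FactGroup carrS using cS by (rule countable_image)
  obtain I :: "nat set" and n where In: "\<forall>i\<in>I. (\<exists>p k. prime p \<and> k \<ge> 1 \<and> n i = p ^ k) \<and> n i dvd CARD('n)"
    "SO_subgroup S Mod N \<cong> sum_group I (\<lambda>i. integer_mod_group (n i))"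
    using comm_group.bounded_decomp[OF conjunct1[OF Q] cQ d0] Q by blast
  show ?thesis using normN cQ In unfolding S_def N_def by blast
qed


end
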